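(* Let $Y$ be a Hausdorff space and $g:Y\to X/\!/G$ continuous. Then: (1) $\iota_g:W_g\to Y\times\mathbb C$ is a topological embedding, and under the homeomorphism $W_g\cong E_g:=\iota_g(W_g)$, the covering $\pi_W:W_g\to Y$ corresponds to the restriction of the first projection $p_1|_{E_g}:E_g\to Y$; in particular $p_1|_{E_g}$ is a covering space equivalent to $\pi_W$. (2) With $F:=\overline P\circ g:Y\to C^{lf}_\infty(\mathbb C)$, one has $E_g=\{(y,z)\in Y\times\mathbb C: z\in F(y)\}$, and $E_g$ is closed in $Y\times\mathbb C$.
   Context: $X=\mathrm{Conf}^{lf}_\infty(\mathbb C)$ is the space of sequences $(x_j)_{j\ge1}$ of pairwise distinct complex numbers with $\{j:|x_j|\le R\}$ finite for all $R$, metrized by $d_{\Sigma}(x,y)=\sum_j2^{-j}\min\{|x_j-y_j|,1\}+d_{\mathcal V}(P(x),P(y))$, where $P(x)=\{x_j\}\in C^{lf}_\infty(\mathbb C)$ (countably infinite locally finite subsets of $\mathbb C$, with the vague topology/vague metric $d_{\mathcal V}$). $G=\mathrm{Aut}(\mathbb N)$ discrete, acting by $\sigma\cdot(x_j)=(x_{\sigma(j)})$; $EG$ a contractible free right $G$-CW complex; $X/\!/G=(EG\times X)/G$ with $(e,x)\cdot\sigma=(e\sigma^{-1},\sigma\cdot x)$; the quotient $EG\times X\to X/\!/G$ is a principal $G$-bundle. $\overline P:X/\!/G\to C^{lf}_\infty(\mathbb C)$, $\overline P([e,x])=P(x)$. $P_g=g^*(EG\times X)\to Y$ is the pullback principal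 $G$-bundle (points $(y,e,x)$), $W_g=P_g\times_G\mathbb N$ (with $((y,e,x)\cdot\sigma,n)\sim((y,e,x),\sigma\cdot n)$), $\pi_W:W_g\to Y$ the projection, $\mathrm{ev}_g([(y,e,x),n])=x_n$, and $\iota_g(w)=(\pi_W(w),\mathrm{ev}_g(w))$. *)

theory Defs
  imports "HOL-Analysis.Analysis"
begin

definition Xset :: "(nat \<Rightarrow> complex) set" where
  "Xset = {x. inj x \<and> (\<forall>R::real. finite {j. cmod (x j) \<le> R})}"

definition Clf :: "complex set set" where
  "Clf = {S. infinite S \<and> countable S \<and> (\<forall>R::real. finite {z\<in>S. cmod z \<le> R})}"

definition Cc :: "(complex \<Rightarrow> real) set" where
  "Cc = {f. continuous_on UNIV f \<and> (\<exists>K. compact K \<and> (\<forall>z. z \<notin> K \<longrightarrow> f z = 0))}"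

text \<open>Integral of f against the counting measure of a locally finite set S.\<close>
definition pair_lf :: "(complex \<Rightarrow> real) \<Rightarrow> complex set \<Rightarrow> real" where
  "pair_lf f S = sum f {z\<in>S. f z \<noteq> 0}"

definition vague_top :: "complex set topology" where
  "vague_top = subtopology
     (topology_generated_by {{S. pair_lf f S \<in> U} | f U. f \<in> Cc \<and> open U}) Clf"

definition Pmap :: "(nat \<Rightarrow> complex) \<Rightarrow> complex set" where
  "Pmap x = range x"

text \<open>Topology of d_Sigma: join of the product topology and the pullback of the vague topology.\<close>
definition Xtop :: "(nat \<Rightarrow> complex) topology" where
  "Xtop = subtopology
     (topology_generated_by
        ({{x. x j \<in> U} | j U. open U} \<union> {{x. Pmap x \<in> V} | V. openin vague_top V})) Xset"

definition Aut :: "(nat \<Rightarrow> nat) set" where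
  "Aut = {\<sigma>. bij \<sigma>}"

text \<open>Free, properly discontinuous right action of Aut(N) on E by homeomorphisms
  (right action law matching x \<cdot> \<sigma> = x \<circ> \<sigma>).\<close>
definition free_proper_right_action :: "'e topology \<Rightarrow> ('e \<Rightarrow> (nat \<Rightarrow> nat) \<Rightarrow> 'e) \<Rightarrow> bool" where
  "free_proper_right_action E act \<longleftrightarrow>
     (\<forall>\<sigma>\<in>Aut. continuous_map E E (\<lambda>e. act e \<sigma>)) \<and>
     (\<forall>e\<in>topspace E. act e id = e) \<and>
     (\<forall>e\<in>topspace E. \<forall>\<sigma>\<in>Aut. \<forall>\<tau>\<in>Aut. act (act e \<sigma>) \<tau> = act e (\<sigma> \<circ> \<tau>)) \<and>
     (\<forall>e\<in>topspace E. \<exists>U. openin E U \<and> e \<in> U \<and>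
         (\<forall>\<sigma>\<in>Aut. \<sigma> \<noteq> id \<longrightarrow> (\<lambda>e. act e \<sigma>) ` U \<inter> U = {}))"

text \<open>Abstract stand-in for a contractible free right G-CW complex EG.\<close>
definition EG_space :: "'e topology \<Rightarrow> ('e \<Rightarrow> (nat \<Rightarrow> nat) \<Rightarrow> 'e) \<Rightarrow> bool" where
  "EG_space E act \<longleftrightarrow> Hausdorff_space E \<and> contractible_space E \<and> free_proper_right_action E act"

definition qtop :: "'a topology \<Rightarrow> ('a \<Rightarrow> 'b) \<Rightarrow> 'b topology" where
  "qtop T q = topology (\<lambda>U. U \<subseteq> q ` topspace T \<and> openin T {p \<in> topspace T. q p \<in> U})"

text \<open>The G-orbit of (e,x) in EG \<times> X, i.e. the point [e,x] of X//G.\<close>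
definition cls :: "('e \<Rightarrow> (nat \<Rightarrow> nat) \<Rightarrow> 'e) \<Rightarrow> 'e \<times> (nat \<Rightarrow> complex) \<Rightarrow> ('e \<times> (nat \<Rightarrow> complex)) set" where
  "cls act p = {(act (fst p) \<sigma>, snd p \<circ> \<sigma>) | \<sigma>. \<sigma> \<in> Aut}"

definition XG_top :: "'e topology \<Rightarrow> ('e \<Rightarrow> (nat \<Rightarrow> nat) \<Rightarrow> 'e) \<Rightarrow> ('e \<times> (nat \<Rightarrow> complex)) set topology" where
  "XG_top E act = qtop (prod_topology E Xtop) (cls act)"

text \<open>Pbar([e,x]) = P(x).\<close>
definition Pbar :: "('e \<times> (nat \<Rightarrow> complex)) set \<Rightarrow> complex set" where
  "Pbar c = Pmap (snd (SOME p. p \<in> c))"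

definition Pg_top :: "'y topology \<Rightarrow> 'e topology \<Rightarrow> ('e \<Rightarrow> (nat \<Rightarrow> nat) \<Rightarrow> 'e)
    \<Rightarrow> ('y \<Rightarrow> ('e \<times> (nat \<Rightarrow> complex)) set) \<Rightarrow> ('y \<times> 'e \<times> (nat \<Rightarrow> complex)) topology" where
  "Pg_top Y E act g = subtopology (prod_topology Y (prod_topology E Xtop))
     {(y, p). y \<in> topspace Y \<and> p \<in> topspace (prod_topology E Xtop) \<and> g y = cls act p}"

text \<open>Class of ((y,e,x),n) in P_g \<times>_G N: ((y,e,x)\<cdot>\<sigma>, m) \<sim> ((y,e,x), \<sigma> m).\<close>
definition Wcls :: "('e \<Rightarrow> (nat \<Rightarrow> nat) \<Rightarrow> 'e) \<Rightarrow> ('y \<times> 'e \<times> (nat \<Rightarrow> complex)) \<times> nat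
    \<Rightarrow> (('y \<times> 'e \<times> (nat \<Rightarrow> complex)) \<times> nat) set" where
  "Wcls act q = (case q of ((y, e, x), n) \<Rightarrow>
     {((y, act e \<sigma>, x \<circ> \<sigma>), inv \<sigma> n) | \<sigma>. \<sigma> \<in> Aut})"

definition W_top :: "'y topology \<Rightarrow> 'e topology \<Rightarrow> ('e \<Rightarrow> (nat \<Rightarrow> nat) \<Rightarrow> 'e)
    \<Rightarrow> ('y \<Rightarrow> ('e \<times> (nat \<Rightarrow> complex)) set)
    \<Rightarrow> (('y \<times> 'e \<times> (nat \<Rightarrow> complex)) \<times> nat) set topology" where
  "W_top Y E act g = qtop (prod_topology (Pg_top Y E act g) (discrete_topology UNIV)) (Wcls act)"

definition piW :: "(('y \<times> 'e \<times> (nat \<Rightarrow> complex)) \<times> nat) set \<Rightarrow> 'y" where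
  "piW w = fst (fst (SOME p. p \<in> w))"

definition evW :: "(('y \<times> 'e \<times> (nat \<Rightarrow> complex)) \<times> nat) set \<Rightarrow> complex" where
  "evW w = (case (SOME p. p \<in> w) of ((y, e, x), n) \<Rightarrow> x n)"

definition iotaW :: "(('y \<times> 'e \<times> (nat \<Rightarrow> complex)) \<times> nat) set \<Rightarrow> 'y \<times> complex" where
  "iotaW w = (piW w, evW w)"

definition Eg :: "'y topology \<Rightarrow> 'e topology \<Rightarrow> ('e \<Rightarrow> (nat \<Rightarrow> nat) \<Rightarrow> 'e)
    \<Rightarrow> ('y \<Rightarrow> ('e \<times> (nat \<Rightarrow> complex)) set) \<Rightarrow> ('y \<times> complex) set" where
  "Eg Y E act g = iotaW ` topspace (W_top Y E act g)"

definition covering_map :: "'a topology \<Rightarrow> 'b topology \<Rightarrow> ('a \<Rightarrow> 'b) \<Rightarrow> bool" where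
  "covering_map C B p \<longleftrightarrow> continuous_map C B p \<and> p ` topspace C = topspace B \<and>
     (\<forall>b\<in>topspace B. \<exists>U. openin B U \<and> b \<in> U \<and>
        (\<exists>\<V>. \<Union>\<V> = {c \<in> topspace C. p c \<in> U} \<and> pairwise disjnt \<V> \<and>
             (\<forall>V\<in>\<V>. openin C V \<and> homeomorphic_map (subtopology C V) (subtopology B U) p)))"

end

theory Submission
  imports Defs
begin

lemma qtop_istopology:
  "istopology (\<lambda>U. U \<subseteq> q ` topspace T \<and> openin T {p \<in> topspace T. q p \<in> U})"
proof -
  have 1: "S \<inter> U \<subseteq> q ` topspace T \<and> openin T {p \<in> topspace T. q p \<in> S \<inter> U}"
    if S: "S \<subseteq> q ` topspace T \<and> openin T {p \<in> topspace T. q p \<in> S}"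
    and U: "U \<subseteq> q ` topspace T \<and> openin T {p \<in> topspace T. q p \<in> U}" for S U
  proof -
    have "{p \<in> topspace T. q p \<in> S \<inter> U} = {p \<in> topspace T. q p \<in> S} \<inter> {p \<in> topspace T. q p \<in> U}" by auto
    with S U show ?thesis by auto
  qed
  have 2: "\<Union>K \<subseteq> q ` topspace T \<and> openin T {p \<in> topspace T. q p \<in> \<Union>K}"
    if K: "\<forall>S\<in>K. S \<subseteq> q ` topspace T \<and> openin T {p \<in> topspace T. q p \<in> S}" for K
  proof -
    have "{p \<in> topspace T. q p \<in> \<Union>K} = (\<Union>S\<in>K. {p \<in> topspace T. q p \<in> S})" by auto
    with K show ?thesis by auto
  qed
  show ?thesis unfolding istopology_def using 1 2 by blast
qed

lemma openin_qtop:
  "openin (qtop T q) U \<longleftrightarrow> U \<subseteq> q ` topspace T \<and> openin T {p \<in> topspace T. q p \<in> U}"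
  unfolding qtop_def using qtop_istopology[of q T] by (simp add: topology_inverse')

lemma topspace_qtop [simp]: "topspace (qtop T q) = q ` topspace T"
proof -
  have e: "{p \<in> topspace T. q p \<in> q ` topspace T} = topspace T" by auto
  have "openin (qtop T q) (q ` topspace T)" unfolding openin_qtop e by auto
  then have "q ` topspace T \<subseteq> topspace (qtop T q)" by (rule openin_subset[THEN subset_trans, OF _ order_refl]) 
  moreover have "topspace (qtop T q) \<subseteq> q ` topspace T"
    using openin_qtop[of T q "topspace (qtop T q)"] by simp
  ultimately show ?thesis by auto
qed

lemma continuous_map_qtop: "continuous_map T (qtop T q) q"
  unfolding continuous_map_def
proof (intro conjI allI impI)
  show "q \<in> topspace T \<rightarrow> topspace (qtop T q)" by auto
  fix U assume "openin (qtop T q) U"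
  then show "openin T {x \<in> topspace T. q x \<in> U}" unfolding openin_qtop by auto
qed

lemma continuous_map_from_qtop:
  assumes "continuous_map T Z (\<lambda>p. f (q p))"
  shows "continuous_map (qtop T q) Z f"
  unfolding continuous_map_def
proof (intro conjI allI impI)
  show "f \<in> topspace (qtop T q) \<rightarrow> topspace Z" using assms by (auto simp: continuous_map_def)
  fix U assume U: "openin Z U"
  have e: "{p \<in> topspace T. q p \<in> {x \<in> q ` topspace T. f x \<in> U}} = {p \<in> topspace T. f (q p) \<in> U}" by auto
  have "openin T {p \<in> topspace T. q p \<in> {x \<in> q ` topspace T. f x \<in> U}}"
    unfolding e using assms U by (simp add: continuous_map_def)
  then show "openin (qtop T q) {x \<in> topspace (qtop T q). f x \<in> U}"
    unfolding openin_qtop by auto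
qed

lemma topspace_Xtop [simp]: "topspace Xtop = Xset"
proof -
  have e: "{x::nat\<Rightarrow>complex. x 0 \<in> UNIV} = UNIV" by simp
  have "UNIV \<in> {{x::nat\<Rightarrow>complex. x j \<in> U} | j U. open (U::complex set)}"
    apply (rule CollectI) apply (rule exI[of _ 0]) apply (rule exI[of _ UNIV]) using e by simp
  then have "UNIV \<subseteq> \<Union>({{x. x j \<in> U} | j U. open U} \<union> {{x. Pmap x \<in> V} | V. openin vague_top V})"
    by (intro Union_upper UnI1)
  then have "\<Union>({{x. x j \<in> U} | j U. open U} \<union> {{x. Pmap x \<in> V} | V. openin vague_top V}) = UNIV" by (rule top_unique[THEN iffD1])
  then show ?thesis unfolding Xtop_def by simp
qed

lemma zero_Cc: "(\<lambda>_. 0) \<in> Cc"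
  unfolding Cc_def by (auto intro!: exI[of _ "{}"])

lemma topspace_vague [simp]: "topspace vague_top = Clf"
proof -
  have e: "{S. pair_lf (\<lambda>_. 0) S \<in> (UNIV::real set)} = UNIV" by simp
  have "UNIV \<in> {{S. pair_lf f S \<in> U} | f U. f \<in> Cc \<and> open U}"
    apply (rule CollectI) apply (rule exI[of _ "\<lambda>_. 0"]) apply (rule exI[of _ UNIV]) using e zero_Cc by simp
  then have "UNIV \<subseteq> \<Union>{{S. pair_lf f S \<in> U} | f U. f \<in> Cc \<and> open U}"
    by (intro Union_upper)
  then have "\<Union>{{S. pair_lf f S \<in> U} | f U. f \<in> Cc \<and> open U} = UNIV" by (rule top_unique[THEN iffD1])
  then show ?thesis unfolding vague_top_def by simp
qed

lemma Pmap_Clf: "x \<in> Xset \<Longrightarrow> Pmap x \<in> Clf"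
proof -
  assume x: "x \<in> Xset"
  have inj: "inj x" and fin: "\<And>R. finite {j. cmod (x j) \<le> R}" using x unfolding Xset_def by auto
  have "{z \<in> range x. cmod z \<le> R} = x ` {j. cmod (x j) \<le> R}" for R by auto
  then have 1: "finite {z \<in> range x. cmod z \<le> R}" for R using fin by simp
  have 2: "infinite (range x)" using inj finite_imageD by blast
  have 3: "countable (range x)" by simp
  show ?thesis unfolding Clf_def Pmap_def using 1 2 3 by simp
qed

lemma openin_Xtop_coord: "open U \<Longrightarrow> openin Xtop {x \<in> Xset. x j \<in> U}"
proof -
  assume "open U"
  then have "openin (topology_generated_by
        ({{x. x j \<in> U} | j U. open U} \<union> {{x. Pmap x \<in> V} | V. openin vague_top V})) {x. x j \<in> U}"
    apply (intro topology_generated_by_Basis UnI1)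
    apply (rule CollectI) apply (rule exI[of _ j]) apply (rule exI[of _ U]) using \<open>open U\<close> by simp
  moreover have "{x \<in> Xset. x j \<in> U} = {x. x j \<in> U} \<inter> Xset" by auto
  ultimately show ?thesis unfolding Xtop_def openin_subtopology by blast
qed

lemma openin_Xtop_P: "openin vague_top V \<Longrightarrow> openin Xtop {x \<in> Xset. Pmap x \<in> V}"
proof -
  assume "openin vague_top V"
  then have "openin (topology_generated_by
        ({{x. x j \<in> U} | j U. open U} \<union> {{x. Pmap x \<in> V} | V. openin vague_top V})) {x. Pmap x \<in> V}"
    apply (intro topology_generated_by_Basis UnI2)
    apply (rule CollectI) apply (rule exI[of _ V]) using \<open>openin vague_top V\<close> by simp
  moreover have "{x \<in> Xset. Pmap x \<in> V} = {x. Pmap x \<in> V} \<inter> Xset" by auto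
  ultimately show ?thesis unfolding Xtop_def openin_subtopology by blast
qed

lemma continuous_map_coord: "continuous_map Xtop euclidean (\<lambda>x. x j)"
  unfolding continuous_map_def using openin_Xtop_coord by auto

lemma continuous_map_Pmap: "continuous_map Xtop vague_top Pmap"
  unfolding continuous_map_def using openin_Xtop_P Pmap_Clf by auto

lemma openin_vague_pair:
  assumes "f \<in> Cc" "open U"
  shows "openin vague_top {S \<in> Clf. pair_lf f S \<in> U}"
proof -
  have "openin (topology_generated_by {{S. pair_lf f S \<in> U} | f U. f \<in> Cc \<and> open U}) {S. pair_lf f S \<in> U}"
    apply (intro topology_generated_by_Basis)
    apply (rule CollectI) apply (rule exI[of _ f]) apply (rule exI[of _ U]) using assms by simp
  moreover have "{S \<in> Clf. pair_lf f S \<in> U} = {S. pair_lf f S \<in> U} \<inter> Clf" by auto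
  ultimately show ?thesis unfolding vague_top_def openin_subtopology by blast
qed

lemma Pmap_comp: "bij \<sigma> \<Longrightarrow> Pmap (x \<circ> \<sigma>) = Pmap x"
proof -
  assume s: "bij \<sigma>"
  have "range (x \<circ> \<sigma>) = x ` range \<sigma>" by (simp add: image_comp)
  then show ?thesis unfolding Pmap_def using s by (simp add: bij_is_surj)
qed

lemma Xset_comp: "x \<in> Xset \<Longrightarrow> bij \<sigma> \<Longrightarrow> x \<circ> \<sigma> \<in> Xset"
proof -
  assume x: "x \<in> Xset" and s: "bij \<sigma>"
  have "inj (x \<circ> \<sigma>)" using x s by (auto simp: Xset_def bij_is_inj inj_compose)
  moreover have "finite {j. cmod ((x \<circ> \<sigma>) j) \<le> R}" for R
  proof -
    have "{j. cmod ((x \<circ> \<sigma>) j) \<le> R} = \<sigma> -` {j. cmod (x j) \<le> R}" by auto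
    moreover have "finite {j. cmod (x j) \<le> R}" using x by (auto simp: Xset_def)
    ultimately show ?thesis using s finite_vimageI[OF _ bij_is_inj[OF s]] by metis
  qed
  ultimately show ?thesis by (auto simp: Xset_def)
qed

lemma continuous_map_Xcomp: "bij \<sigma> \<Longrightarrow> continuous_map Xtop Xtop (\<lambda>x. x \<circ> \<sigma>)"
proof -
  assume s: "bij \<sigma>"
  have "continuous_map Xtop (topology_generated_by
        ({{x. x j \<in> U} | j U. open U} \<union> {{x. Pmap x \<in> V} | V. openin vague_top V})) (\<lambda>x. x \<circ> \<sigma>)"
  proof (rule continuous_on_generated_topo)
    fix W assume "W \<in> {{x. x j \<in> U} | j U. open U} \<union> {{x. Pmap x \<in> V} | V. openin vague_top V}"
    then consider j U where "open U" "W = {x. x j \<in> U}" | V where "openin vague_top V" "W = {x. Pmap x \<in> V}"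
      by blast
    then show "openin Xtop ((\<lambda>x. x \<circ> \<sigma>) -` W \<inter> topspace Xtop)"
    proof cases
      case 1
      then have "(\<lambda>x. x \<circ> \<sigma>) -` W \<inter> topspace Xtop = {x \<in> Xset. x (\<sigma> j) \<in> U}" by auto
      then show ?thesis using openin_Xtop_coord[OF 1(1)] by simp
    next
      case 2
      then have "(\<lambda>x. x \<circ> \<sigma>) -` W \<inter> topspace Xtop = {x \<in> Xset. Pmap x \<in> V}" using Pmap_comp[OF s] by auto
      then show ?thesis using openin_Xtop_P[OF 2(1)] by simp
    qed
  qed auto
  then have "continuous_map Xtop (topology_generated_by
        ({{x. x j \<in> U} | j U. open U} \<union> {{x. Pmap x \<in> V} | V. openin vague_top V})) (\<lambda>x. x \<circ> \<sigma>) \<and>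
     (\<lambda>x. x \<circ> \<sigma>) \<in> topspace Xtop \<rightarrow> Xset" using Xset_comp[OF _ s] by auto
  then have "continuous_map Xtop (subtopology (topology_generated_by
        ({{x. x j \<in> U} | j U. open U} \<union> {{x. Pmap x \<in> V} | V. openin vague_top V})) Xset) (\<lambda>x. x \<circ> \<sigma>)"
    unfolding continuous_map_in_subtopology .
  then show ?thesis unfolding Xtop_def[symmetric] .
qed

definition bump :: "complex \<Rightarrow> real \<Rightarrow> complex \<Rightarrow> real" where
  "bump a r z = min 1 (max 0 (2 - cmod (z - a) / r))"

lemma bump_nonneg: "0 \<le> bump a r z"
  unfolding bump_def by simp

lemma bump_one: "r > 0 \<Longrightarrow> cmod (z - a) < r \<Longrightarrow> bump a r z = 1"
  unfolding bump_def by (simp add: field_simps)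

lemma bump_zero: "r > 0 \<Longrightarrow> 2 * r \<le> cmod (z - a) \<Longrightarrow> bump a r z = 0"
  unfolding bump_def by (simp add: field_simps)

lemma bump_Cc: assumes r: "r > 0" shows "bump a r \<in> Cc"
proof -
  have "continuous_on UNIV (bump a r)" unfolding bump_def using r by (intro continuous_intros) auto
  moreover have "compact (cball a (2 * r))" by simp
  moreover have "\<forall>z. z \<notin> cball a (2 * r) \<longrightarrow> bump a r z = 0"
    using r by (auto intro!: bump_zero simp: dist_norm norm_minus_commute)
  ultimately show ?thesis unfolding Cc_def by blast
qed

lemma Clf_lf: "S \<in> Clf \<Longrightarrow> finite {z \<in> S. cmod z \<le> R}"
  unfolding Clf_def by simp

lemma Clf_supp_finite:
  assumes S: "S \<in> Clf" and f: "f \<in> Cc"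
  shows "finite {z \<in> S. f z \<noteq> 0}"
proof -
  obtain K where K: "compact K" "\<And>z. z \<notin> K \<Longrightarrow> f z = 0" using f unfolding Cc_def by blast
  obtain R where R: "\<And>z. z \<in> K \<Longrightarrow> cmod z \<le> R"
    using compact_imp_bounded[OF K(1)] unfolding bounded_iff by blast
  have "{z \<in> S. f z \<noteq> 0} \<subseteq> {z \<in> S. cmod z \<le> R}" using K(2) R by blast
  then show ?thesis using Clf_lf[OF S] finite_subset by blast
qed

lemma pair_lf_ge:
  assumes S: "S \<in> Clf" and f: "f \<in> Cc" and nn: "\<And>z. 0 \<le> f z" and A: "A \<subseteq> S" "finite A"
  shows "sum f A \<le> pair_lf f S"
proof -
  define B where "B = {z \<in> S. f z \<noteq> 0}"
  have fB: "finite B" unfolding B_def using Clf_supp_finite[OF S f] .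
  have "sum f A \<le> sum f (A \<union> B)" using fB A nn by (intro sum_mono2) auto
  also have "sum f (A \<union> B) = sum f B"
    by (rule sum.mono_neutral_left[symmetric]) (use fB A in \<open>auto simp: B_def\<close>)
  finally show ?thesis unfolding pair_lf_def B_def .
qed

lemma sep_radius:
  assumes lf: "\<And>R. finite {z \<in> S. cmod z \<le> R}"
  shows "\<exists>r>0. \<forall>z\<in>S. z \<noteq> a \<longrightarrow> 2 * r < cmod (z - a)"
proof -
  define D where "D = (\<lambda>z. cmod (z - a)) ` {z \<in> S. z \<noteq> a \<and> cmod z \<le> cmod a + 1}"
  have fD: "finite D" unfolding D_def using lf[of "cmod a + 1"]
    by (intro finite_imageI) (rule finite_subset[of _ "{z \<in> S. cmod z \<le> cmod a + 1}"], auto)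
  define m where "m = Min (insert 1 D)"
  have mpos: "m > 0" unfolding m_def using fD
    by (subst Min_gr_iff) (auto simp: D_def)
  have m1: "m \<le> 1" unfolding m_def using fD by simp
  have mD: "m \<le> d" if "d \<in> D" for d unfolding m_def using fD that by simp
  show ?thesis
  proof (intro exI[of _ "m / 3"] conjI ballI impI)
    show "m / 3 > 0" using mpos by simp
    fix z assume z: "z \<in> S" "z \<noteq> a"
    show "2 * (m / 3) < cmod (z - a)"
    proof (cases "cmod z \<le> cmod a + 1")
      case True
      then have "cmod (z - a) \<in> D" unfolding D_def using z by blast
      then have "m \<le> cmod (z - a)" by (rule mD)
      then show ?thesis using mpos by simp
    next
      case False
      have "cmod z - cmod a \<le> cmod (z - a)" by (rule norm_triangle_ineq2)
      then show ?thesis using False m1 mpos by simp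
    qed
  qed
qed

lemma Xtop_isolate:
  assumes x0: "x0 \<in> Xset"
  shows "\<exists>N r. openin Xtop N \<and> x0 \<in> N \<and> r > 0 \<and>
     (\<forall>x\<in>N. cmod (x n - x0 n) < r \<and> (\<forall>j. cmod (x j - x0 n) < r \<longrightarrow> j = n))"
proof -
  define a where "a = x0 n"
  have S0: "Pmap x0 \<in> Clf" using Pmap_Clf[OF x0] .
  obtain r where r: "r > 0" "\<And>z. z \<in> Pmap x0 \<Longrightarrow> z \<noteq> a \<Longrightarrow> 2 * r < cmod (z - a)"
    using sep_radius[of "Pmap x0" a] Clf_lf[OF S0] by blast
  define f where "f = bump a r"
  have fC: "f \<in> Cc" unfolding f_def using bump_Cc[OF r(1)] .
  have fnn: "\<And>z. 0 \<le> f z" unfolding f_def by (rule bump_nonneg)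
  have "{z \<in> Pmap x0. f z \<noteq> 0} = {a}"
  proof -
    have "f a = 1" unfolding f_def using r(1) by (simp add: bump_one)
    moreover have "a \<in> Pmap x0" unfolding a_def Pmap_def by simp
    moreover have "f z = 0" if "z \<in> Pmap x0" "z \<noteq> a" for z
      unfolding f_def using r(2)[OF that] r(1) by (intro bump_zero) auto
    ultimately show ?thesis by force
  qed
  then have p0: "pair_lf f (Pmap x0) = 1" unfolding pair_lf_def f_def using r(1) by (simp add: bump_one)
  define N where "N = {x \<in> Xset. Pmap x \<in> {S \<in> Clf. pair_lf f S \<in> {..<3/2}}} \<inter> {x \<in> Xset. x n \<in> ball a r}"
  have "openin Xtop N" unfolding N_def
    by (intro openin_Int openin_Xtop_P openin_Xtop_coord openin_vague_pair fC) auto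
  moreover have "x0 \<in> N" unfolding N_def using x0 S0 p0 r(1) by (simp add: a_def)
  moreover have "cmod (x n - x0 n) < r \<and> (\<forall>j. cmod (x j - x0 n) < r \<longrightarrow> j = n)" if x: "x \<in> N" for x
  proof -
    have xX: "x \<in> Xset" and Sx: "Pmap x \<in> Clf" and px: "pair_lf f (Pmap x) < 3/2" and xn: "cmod (x n - a) < r"
      using x unfolding N_def by (auto simp: dist_norm norm_minus_commute)
    have "j = n" if j: "cmod (x j - a) < r" for j
    proof (rule ccontr)
      assume jn: "j \<noteq> n"
      have inj: "inj x" using xX unfolding Xset_def by simp
      then have ne: "x j \<noteq> x n" using jn by (meson injD)
      have "sum f {x j, x n} \<le> pair_lf f (Pmap x)"
        using Sx fC fnn by (intro pair_lf_ge) (auto simp: Pmap_def)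
      moreover have "sum f {x j, x n} = 2" using ne j xn r(1) by (simp add: f_def bump_one)
      ultimately show False using px by simp
    qed
    then show ?thesis using xn a_def by auto
  qed
  ultimately show ?thesis using r(1) by blast
qed

lemma vague_avoid:
  assumes S: "S \<in> Clf" and z0: "z0 \<notin> S"
  shows "\<exists>V r. openin vague_top V \<and> S \<in> V \<and> r > 0 \<and> (\<forall>T\<in>V. \<forall>z\<in>T. r \<le> cmod (z - z0))"
proof -
  obtain r where r: "r > 0" "\<And>z. z \<in> S \<Longrightarrow> z \<noteq> z0 \<Longrightarrow> 2 * r < cmod (z - z0)"
    using sep_radius[of S z0] Clf_lf[OF S] by blast
  define f where "f = bump z0 r"
  have fC: "f \<in> Cc" unfolding f_def using bump_Cc[OF r(1)] .
  have fnn: "\<And>z. 0 \<le> f z" unfolding f_def by (rule bump_nonneg)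
  have "f z = 0" if "z \<in> S" for z
  proof -
    have "z \<noteq> z0" using that z0 by blast
    then show ?thesis unfolding f_def using r(1) less_imp_le[OF r(2)[OF that]] by (rule_tac bump_zero) auto
  qed
  then have "{z \<in> S. f z \<noteq> 0} = {}" by blast
  then have p0: "pair_lf f S = 0" unfolding pair_lf_def by simp
  define V where "V = {T \<in> Clf. pair_lf f T \<in> {..<1}}"
  have "openin vague_top V" unfolding V_def by (intro openin_vague_pair fC) auto
  moreover have "S \<in> V" unfolding V_def using S p0 by simp
  moreover have "r \<le> cmod (z - z0)" if T: "T \<in> V" and z: "z \<in> T" for T z
  proof (rule ccontr)
    assume "\<not> r \<le> cmod (z - z0)"
    then have "f z = 1" unfolding f_def using r(1) by (simp add: bump_one)
    moreover have "sum f {z} \<le> pair_lf f T" using T z fC fnn unfolding V_def by (intro pair_lf_ge) auto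
    ultimately show False using T unfolding V_def by simp
  qed
  ultimately show ?thesis using r(1) by blast
qed

lemma Aut_id: "id \<in> Aut" unfolding Aut_def by simp
lemma Aut_comp: "\<sigma> \<in> Aut \<Longrightarrow> \<tau> \<in> Aut \<Longrightarrow> \<sigma> \<circ> \<tau> \<in> Aut" unfolding Aut_def by (simp add: bij_comp)
lemma Aut_inv: "\<sigma> \<in> Aut \<Longrightarrow> inv \<sigma> \<in> Aut" unfolding Aut_def by (simp add: bij_imp_bij_inv)
lemma Aut_bij: "\<sigma> \<in> Aut \<Longrightarrow> bij \<sigma>" unfolding Aut_def by simp
lemma Aut_rinv: "\<sigma> \<in> Aut \<Longrightarrow> \<sigma> \<circ> inv \<sigma> = id" unfolding Aut_def by (metis mem_Collect_eq bij_is_surj surj_iff)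
lemma Aut_linv: "\<sigma> \<in> Aut \<Longrightarrow> inv \<sigma> \<circ> \<sigma> = id" unfolding Aut_def by (metis mem_Collect_eq bij_is_inj inj_iff)
lemma Aut_rinv_app: "\<sigma> \<in> Aut \<Longrightarrow> \<sigma> (inv \<sigma> n) = n" using Aut_rinv[of \<sigma>] by (metis comp_apply id_apply)
lemma Aut_linv_app: "\<sigma> \<in> Aut \<Longrightarrow> inv \<sigma> (\<sigma> n) = n" using Aut_linv[of \<sigma>] by (metis comp_apply id_apply)
lemma Aut_inv_comp: "\<sigma> \<in> Aut \<Longrightarrow> \<tau> \<in> Aut \<Longrightarrow> inv (\<sigma> \<circ> \<tau>) = inv \<tau> \<circ> inv \<sigma>"
  unfolding Aut_def by (simp add: o_inv_distrib)

lemma orbit_eq: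
  assumes idA: "\<And>a. a \<in> Sa \<Longrightarrow> A a id = a"
    and compA: "\<And>a \<sigma> \<tau>. a \<in> Sa \<Longrightarrow> \<sigma> \<in> Aut \<Longrightarrow> \<tau> \<in> Aut \<Longrightarrow> A (A a \<sigma>) \<tau> = A a (\<sigma> \<circ> \<tau>)"
    and inA: "\<And>a \<sigma>. a \<in> Sa \<Longrightarrow> \<sigma> \<in> Aut \<Longrightarrow> A a \<sigma> \<in> Sa"
    and a: "a \<in> Sa" and b: "b \<in> Sa"
  shows "{A a \<sigma> | \<sigma>. \<sigma> \<in> Aut} = {A b \<sigma> | \<sigma>. \<sigma> \<in> Aut} \<longleftrightarrow> (\<exists>\<sigma>\<in>Aut. b = A a \<sigma>)"
proof
  assume eq: "{A a \<sigma> | \<sigma>. \<sigma> \<in> Aut} = {A b \<sigma> | \<sigma>. \<sigma> \<in> Aut}"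
  have "b \<in> {A b \<sigma> | \<sigma>. \<sigma> \<in> Aut}" using idA[OF b] Aut_id by (metis (mono_tags, lifting) mem_Collect_eq)
  then have "b \<in> {A a \<sigma> | \<sigma>. \<sigma> \<in> Aut}" using eq by simp
  then show "\<exists>\<sigma>\<in>Aut. b = A a \<sigma>" by blast
next
  assume "\<exists>\<sigma>\<in>Aut. b = A a \<sigma>"
  then obtain \<sigma> where s: "\<sigma> \<in> Aut" "b = A a \<sigma>" by blast
  show "{A a \<sigma> | \<sigma>. \<sigma> \<in> Aut} = {A b \<sigma> | \<sigma>. \<sigma> \<in> Aut}"
  proof (intro set_eqI iffI)
    fix c assume "c \<in> {A a \<sigma> | \<sigma>. \<sigma> \<in> Aut}"
    then obtain \<tau> where t: "\<tau> \<in> Aut" "c = A a \<tau>" by blast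
    have 1: "A b (inv \<sigma> \<circ> \<tau>) = A a (\<sigma> \<circ> (inv \<sigma> \<circ> \<tau>))" unfolding s(2) by (rule compA[OF a s(1) Aut_comp[OF Aut_inv[OF s(1)] t(1)]])
    have 2: "\<sigma> \<circ> (inv \<sigma> \<circ> \<tau>) = \<tau>" by (simp only: o_assoc Aut_rinv[OF s(1)] id_o)
    have "c = A b (inv \<sigma> \<circ> \<tau>)" unfolding 1 2 t(2) ..
    moreover have "inv \<sigma> \<circ> \<tau> \<in> Aut" using Aut_comp[OF Aut_inv[OF s(1)] t(1)] .
    ultimately show "c \<in> {A b \<sigma> | \<sigma>. \<sigma> \<in> Aut}" by blast
  next
    fix c assume "c \<in> {A b \<sigma> | \<sigma>. \<sigma> \<in> Aut}"
    then obtain \<tau> where t: "\<tau> \<in> Aut" "c = A b \<tau>" by blast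
    have "c = A a (\<sigma> \<circ> \<tau>)" unfolding t(2) s(2) by (rule compA[OF a s(1) t(1)])
    moreover have "\<sigma> \<circ> \<tau> \<in> Aut" using Aut_comp[OF s(1) t(1)] .
    ultimately show "c \<in> {A a \<sigma> | \<sigma>. \<sigma> \<in> Aut}" by blast
  qed
qed

lemma orbit_self:
  assumes "A a id = a" shows "a \<in> {A a \<sigma> | \<sigma>. \<sigma> \<in> Aut}"
  using assms Aut_id by (metis (mono_tags, lifting) mem_Collect_eq)

definition ract :: "('e \<Rightarrow> (nat \<Rightarrow> nat) \<Rightarrow> 'e) \<Rightarrow> 'e \<times> (nat \<Rightarrow> complex) \<Rightarrow> (nat \<Rightarrow> nat) \<Rightarrow> 'e \<times> (nat \<Rightarrow> complex)" where
  "ract act p \<sigma> = (act (fst p) \<sigma>, snd p \<circ> \<sigma>)"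

lemma cls_ract: "cls act p = {ract act p \<sigma> | \<sigma>. \<sigma> \<in> Aut}"
  unfolding cls_def ract_def by simp

definition wact :: "('e \<Rightarrow> (nat \<Rightarrow> nat) \<Rightarrow> 'e) \<Rightarrow> ('y \<times> 'e \<times> (nat \<Rightarrow> complex)) \<times> nat \<Rightarrow> (nat \<Rightarrow> nat)
     \<Rightarrow> ('y \<times> 'e \<times> (nat \<Rightarrow> complex)) \<times> nat" where
  "wact act a \<sigma> = ((fst (fst a), ract act (snd (fst a)) \<sigma>), inv \<sigma> (snd a))"

lemma Wcls_wact: "Wcls act a = {wact act a \<sigma> | \<sigma>. \<sigma> \<in> Aut}"
proof -
  obtain y e x n where a: "a = ((y, e, x), n)" by (metis prod.collapse)
  show ?thesis unfolding a Wcls_def wact_def ract_def by simp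
qed

context
  fixes EG :: "'e topology" and act :: "'e \<Rightarrow> (nat \<Rightarrow> nat) \<Rightarrow> 'e"
  assumes EG: "EG_space EG act"
begin

lemma act_cont: "\<sigma> \<in> Aut \<Longrightarrow> continuous_map EG EG (\<lambda>e. act e \<sigma>)"
  using EG unfolding EG_space_def free_proper_right_action_def by blast

lemma act_id: "e \<in> topspace EG \<Longrightarrow> act e id = e"
  using EG unfolding EG_space_def free_proper_right_action_def by blast

lemma act_comp: "e \<in> topspace EG \<Longrightarrow> \<sigma> \<in> Aut \<Longrightarrow> \<tau> \<in> Aut \<Longrightarrow> act (act e \<sigma>) \<tau> = act e (\<sigma> \<circ> \<tau>)"
  using EG unfolding EG_space_def free_proper_right_action_def by blast

lemma act_proper: "e \<in> topspace EG \<Longrightarrow> \<exists>U. openin EG U \<and> e \<in> U \<and>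
         (\<forall>\<sigma>\<in>Aut. \<sigma> \<noteq> id \<longrightarrow> (\<lambda>e. act e \<sigma>) ` U \<inter> U = {})"
  using EG unfolding EG_space_def free_proper_right_action_def by blast

lemma act_in: "e \<in> topspace EG \<Longrightarrow> \<sigma> \<in> Aut \<Longrightarrow> act e \<sigma> \<in> topspace EG"
  using act_cont[of \<sigma>] unfolding continuous_map_def by blast

abbreviation "TT \<equiv> prod_topology EG Xtop"

lemma topspace_TT: "topspace TT = topspace EG \<times> Xset" by simp

lemma ract_in: "p \<in> topspace TT \<Longrightarrow> \<sigma> \<in> Aut \<Longrightarrow> ract act p \<sigma> \<in> topspace TT"
proof -
  assume p: "p \<in> topspace TT" and s: "\<sigma> \<in> Aut"
  obtain e x where ex: "p = (e, x)" "e \<in> topspace EG" "x \<in> Xset" using p by auto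
  show ?thesis unfolding ex ract_def using act_in[OF ex(2) s] Xset_comp[OF ex(3) Aut_bij[OF s]] by simp
qed

lemma ract_id: "p \<in> topspace TT \<Longrightarrow> ract act p id = p"
proof -
  assume p: "p \<in> topspace TT"
  obtain e x where ex: "p = (e, x)" "e \<in> topspace EG" "x \<in> Xset" using p by auto
  show ?thesis unfolding ex ract_def using act_id[OF ex(2)] by simp
qed

lemma ract_comp: "p \<in> topspace TT \<Longrightarrow> \<sigma> \<in> Aut \<Longrightarrow> \<tau> \<in> Aut \<Longrightarrow> ract act (ract act p \<sigma>) \<tau> = ract act p (\<sigma> \<circ> \<tau>)"
proof -
  assume p: "p \<in> topspace TT" and s: "\<sigma> \<in> Aut" and t: "\<tau> \<in> Aut"
  obtain e x where ex: "p = (e, x)" "e \<in> topspace EG" "x \<in> Xset" using p by auto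
  show ?thesis unfolding ex ract_def using act_comp[OF ex(2) s t] by (simp add: o_assoc)
qed

lemma ract_inv: "p \<in> topspace TT \<Longrightarrow> \<sigma> \<in> Aut \<Longrightarrow> ract act (ract act p \<sigma>) (inv \<sigma>) = p"
proof -
  assume p: "p \<in> topspace TT" and s: "\<sigma> \<in> Aut"
  show ?thesis by (simp only: ract_comp[OF p s Aut_inv[OF s]] Aut_rinv[OF s] ract_id[OF p])
qed

lemma cls_eq_iff: "p \<in> topspace TT \<Longrightarrow> p' \<in> topspace TT \<Longrightarrow>
    cls act p = cls act p' \<longleftrightarrow> (\<exists>\<sigma>\<in>Aut. p' = ract act p \<sigma>)"
  unfolding cls_ract
  apply (rule orbit_eq[of "topspace TT"])
  subgoal by (rule ract_id)
  subgoal by (rule ract_comp)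
  subgoal by (rule ract_in)
  by assumption+

lemma cls_self: "p \<in> topspace TT \<Longrightarrow> p \<in> cls act p"
  unfolding cls_ract by (rule orbit_self) (rule ract_id)

lemma cls_mem: "p \<in> topspace TT \<Longrightarrow> p' \<in> cls act p \<Longrightarrow> p' \<in> topspace TT \<and> cls act p' = cls act p"
proof -
  assume p: "p \<in> topspace TT" and "p' \<in> cls act p"
  then obtain \<sigma> where s: "\<sigma> \<in> Aut" "p' = ract act p \<sigma>" unfolding cls_ract by blast
  then have p': "p' \<in> topspace TT" using ract_in p by simp
  have "cls act p = cls act p'" using cls_eq_iff[OF p p'] s by blast
  then show ?thesis using p' by simp
qed

lemma continuous_ract: "\<sigma> \<in> Aut \<Longrightarrow> continuous_map TT TT (\<lambda>p. ract act p \<sigma>)"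
proof -
  assume s: "\<sigma> \<in> Aut"
  have 1: "continuous_map TT EG (\<lambda>p. act (fst p) \<sigma>)"
    using continuous_map_compose[OF continuous_map_fst act_cont[OF s]] by (simp add: o_def)
  have 2: "continuous_map TT Xtop ((\<lambda>x. x \<circ> \<sigma>) \<circ> snd)"
    using continuous_map_compose[OF continuous_map_snd continuous_map_Xcomp[OF Aut_bij[OF s]]] .
  have 3: "((\<lambda>x. x \<circ> \<sigma>) \<circ> snd) = (\<lambda>p. snd p \<circ> \<sigma>)" by (rule ext) (simp only: comp_apply)
  show ?thesis unfolding ract_def using continuous_map_pairedI[OF 1 2[unfolded 3]] .
qed

lemma ract_image_open: "\<sigma> \<in> Aut \<Longrightarrow> openin TT W \<Longrightarrow> openin TT ((\<lambda>p. ract act p \<sigma>) ` W)"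
proof -
  assume s: "\<sigma> \<in> Aut" and W: "openin TT W"
  have WT: "W \<subseteq> topspace TT" using openin_subset[OF W] .
  have "(\<lambda>p. ract act p \<sigma>) ` W = {p \<in> topspace TT. ract act p (inv \<sigma>) \<in> W}"
  proof (intro set_eqI iffI)
    fix p assume "p \<in> (\<lambda>p. ract act p \<sigma>) ` W"
    then obtain w where w: "w \<in> W" "p = ract act w \<sigma>" by blast
    then show "p \<in> {p \<in> topspace TT. ract act p (inv \<sigma>) \<in> W}"
      using ract_in[OF _ s] ract_inv[OF _ s] WT by auto
  next
    fix p assume p: "p \<in> {p \<in> topspace TT. ract act p (inv \<sigma>) \<in> W}"
    have pT: "p \<in> topspace TT" using p by blast
    have "ract act (ract act p (inv \<sigma>)) \<sigma> = p"
      by (simp only: ract_comp[OF pT Aut_inv[OF s] s] Aut_linv[OF s] ract_id[OF pT])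
    then show "p \<in> (\<lambda>p. ract act p \<sigma>) ` W" using p by (metis (no_types, lifting) image_eqI mem_Collect_eq)
  qed
  then show ?thesis using openin_continuous_map_preimage[OF continuous_ract[OF Aut_inv[OF s]] W] by simp
qed

abbreviation "XG \<equiv> XG_top EG act"

lemma topspace_XG: "topspace XG = cls act ` topspace TT"
  unfolding XG_top_def by simp

lemma cls_open_image: "openin TT W \<Longrightarrow> openin XG (cls act ` W)"
proof -
  assume W: "openin TT W"
  have WT: "W \<subseteq> topspace TT" using openin_subset[OF W] .
  have "{p \<in> topspace TT. cls act p \<in> cls act ` W} = (\<Union>\<sigma>\<in>Aut. (\<lambda>p. ract act p \<sigma>) ` W)"
  proof (intro set_eqI iffI)
    fix p assume "p \<in> {p \<in> topspace TT. cls act p \<in> cls act ` W}"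
    then obtain w where p: "p \<in> topspace TT" and w: "w \<in> W" "cls act p = cls act w" by blast
    then obtain \<sigma> where "\<sigma> \<in> Aut" "p = ract act w \<sigma>" using cls_eq_iff[of w p] WT by blast
    then show "p \<in> (\<Union>\<sigma>\<in>Aut. (\<lambda>p. ract act p \<sigma>) ` W)" using w by blast
  next
    fix p assume "p \<in> (\<Union>\<sigma>\<in>Aut. (\<lambda>p. ract act p \<sigma>) ` W)"
    then obtain \<sigma> w where s: "\<sigma> \<in> Aut" "w \<in> W" "p = ract act w \<sigma>" by blast
    then have "p \<in> topspace TT" using ract_in WT by blast
    moreover have "cls act p = cls act w" using cls_eq_iff[of w p] s WT \<open>p \<in> topspace TT\<close> by blast
    ultimately show "p \<in> {p \<in> topspace TT. cls act p \<in> cls act ` W}" using s by blast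
  qed
  moreover have "openin TT (\<Union>\<sigma>\<in>Aut. (\<lambda>p. ract act p \<sigma>) ` W)"
    using ract_image_open W by blast
  ultimately show ?thesis unfolding XG_top_def openin_qtop using WT by auto
qed

lemma Pbar_cls: "p \<in> topspace TT \<Longrightarrow> Pbar (cls act p) = Pmap (snd p)"
proof -
  assume p: "p \<in> topspace TT"
  define p' where "p' = (SOME p'. p' \<in> cls act p)"
  have "p' \<in> cls act p" unfolding p'_def using cls_self[OF p] by (rule someI)
  then obtain \<sigma> where s: "\<sigma> \<in> Aut" "p' = ract act p \<sigma>" unfolding cls_ract by blast
  have "Pbar (cls act p) = Pmap (snd p')" unfolding Pbar_def p'_def ..
  also have "\<dots> = Pmap (snd p)" using s Pmap_comp[OF Aut_bij] by (simp add: ract_def)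
  finally show ?thesis .
qed

lemma continuous_Pbar: "continuous_map XG vague_top Pbar"
  unfolding XG_top_def
proof (rule continuous_map_from_qtop)
  show "continuous_map TT vague_top (\<lambda>p. Pbar (cls act p))"
    by (rule continuous_map_eq[of _ _ "\<lambda>p. Pmap (snd p)"])
      (auto intro: continuous_map_compose[OF continuous_map_snd continuous_map_Pmap, unfolded o_def] simp: Pbar_cls)
qed

end

lemma local_slice:
  assumes EG: "EG_space EG act" and p0: "p0 \<in> topspace (prod_topology EG Xtop)"
  shows "\<exists>Ob. openin (prod_topology EG Xtop) Ob \<and> p0 \<in> Ob \<and>
      (\<forall>o1\<in>Ob. \<forall>\<sigma>\<in>Aut. ract act o1 \<sigma> \<in> Ob \<longrightarrow> \<sigma> = id)"
proof -
  have e0: "fst p0 \<in> topspace EG" and x0: "snd p0 \<in> Xset" using p0 by auto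
  obtain U where U: "openin EG U" "fst p0 \<in> U" "\<And>\<sigma>. \<sigma> \<in> Aut \<Longrightarrow> \<sigma> \<noteq> id \<Longrightarrow> (\<lambda>e. act e \<sigma>) ` U \<inter> U = {}"
    using act_proper[OF EG e0] by blast
  define Ob where "Ob = U \<times> Xset"
  have "openin Xtop Xset" using openin_topspace[of Xtop] by simp
  then have "openin (prod_topology EG Xtop) Ob" unfolding Ob_def using U(1)
    by (simp add: openin_prod_Times_iff)
  moreover have "p0 \<in> Ob" unfolding Ob_def using U(2) x0 by (simp add: mem_Times_iff)
  moreover have "\<sigma> = id" if o1: "o1 \<in> Ob" and s: "\<sigma> \<in> Aut" and in2: "ract act o1 \<sigma> \<in> Ob" for o1 \<sigma>
  proof (rule ccontr)
    assume "\<sigma> \<noteq> id"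
    then have emp: "(\<lambda>e. act e \<sigma>) ` U \<inter> U = {}" using U(3) s by blast
    have "fst o1 \<in> U" using o1 unfolding Ob_def by auto
    moreover have "act (fst o1) \<sigma> \<in> U" using in2 unfolding Ob_def ract_def by auto
    ultimately show False using emp by blast
  qed
  ultimately show ?thesis by blast
qed

context
  fixes Y :: "'y topology" and EG :: "'e topology" and act :: "'e \<Rightarrow> (nat \<Rightarrow> nat) \<Rightarrow> 'e"
    and g :: "'y \<Rightarrow> ('e \<times> (nat \<Rightarrow> complex)) set"
  assumes EG: "EG_space EG act"
    and g: "continuous_map Y (XG_top EG act) g"
begin

abbreviation "PP \<equiv> Pg_top Y EG act g"
abbreviation "PD \<equiv> prod_topology PP (discrete_topology (UNIV::nat set))"
abbreviation "WW \<equiv> W_top Y EG act g"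

lemma topspace_PP: "topspace PP = {(y, p). y \<in> topspace Y \<and> p \<in> topspace (TT EG) \<and> g y = cls act p}"
  unfolding Pg_top_def by auto

lemma topspace_PD: "topspace PD = topspace PP \<times> UNIV" by simp

lemma topspace_WW: "topspace WW = Wcls act ` topspace PD"
  unfolding W_top_def by simp

lemma g_cls: "y \<in> topspace Y \<Longrightarrow> \<exists>p\<in>topspace (TT EG). g y = cls act p"
proof -
  assume "y \<in> topspace Y"
  then have "g y \<in> topspace (XG_top EG act)" using g unfolding continuous_map_def by blast
  then show ?thesis unfolding topspace_XG[OF EG] by blast
qed

lemma wact_in: "a \<in> topspace PD \<Longrightarrow> \<sigma> \<in> Aut \<Longrightarrow> wact act a \<sigma> \<in> topspace PD"
proof -
  assume a: "a \<in> topspace PD" and s: "\<sigma> \<in> Aut"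
  obtain y p n where ap: "a = ((y, p), n)" "y \<in> topspace Y" "p \<in> topspace (TT EG)" "g y = cls act p"
    using a unfolding topspace_PD topspace_PP by auto
  have r: "ract act p \<sigma> \<in> topspace (TT EG)" using ract_in[OF EG ap(3) s] .
  have "cls act p = cls act (ract act p \<sigma>)" using cls_eq_iff[OF EG ap(3) r] s by blast
  then show ?thesis unfolding ap wact_def topspace_PD topspace_PP using ap r by simp
qed

lemma wact_id: "a \<in> topspace PD \<Longrightarrow> wact act a id = a"
proof -
  assume a: "a \<in> topspace PD"
  obtain y p n where ap: "a = ((y, p), n)" "p \<in> topspace (TT EG)"
    using a unfolding topspace_PD topspace_PP by auto
  have "inv (id::nat\<Rightarrow>nat) = id" by (simp add: inv_id)
  then show ?thesis unfolding ap wact_def using ract_id[OF EG ap(2)] by simp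
qed

lemma wact_comp: "a \<in> topspace PD \<Longrightarrow> \<sigma> \<in> Aut \<Longrightarrow> \<tau> \<in> Aut \<Longrightarrow> wact act (wact act a \<sigma>) \<tau> = wact act a (\<sigma> \<circ> \<tau>)"
proof -
  assume a: "a \<in> topspace PD" and s: "\<sigma> \<in> Aut" and t: "\<tau> \<in> Aut"
  obtain y p n where ap: "a = ((y, p), n)" "p \<in> topspace (TT EG)"
    using a unfolding topspace_PD topspace_PP by auto
  show ?thesis unfolding ap wact_def using ract_comp[OF EG ap(2) s t] Aut_inv_comp[OF s t] by simp
qed

lemma Wcls_eq_iff: "a \<in> topspace PD \<Longrightarrow> b \<in> topspace PD \<Longrightarrow>
    Wcls act a = Wcls act b \<longleftrightarrow> (\<exists>\<sigma>\<in>Aut. b = wact act a \<sigma>)"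
  unfolding Wcls_wact
  apply (rule orbit_eq[of "topspace PD"])
  subgoal by (rule wact_id)
  subgoal by (rule wact_comp)
  subgoal by (rule wact_in)
  by assumption+

lemma Wcls_self: "a \<in> topspace PD \<Longrightarrow> a \<in> Wcls act a"
  unfolding Wcls_wact by (rule orbit_self) (rule wact_id)

lemma Wcls_some: "a \<in> topspace PD \<Longrightarrow> \<exists>\<sigma>\<in>Aut. (SOME b. b \<in> Wcls act a) = wact act a \<sigma>"
proof -
  assume a: "a \<in> topspace PD"
  have "(SOME b. b \<in> Wcls act a) \<in> Wcls act a" using Wcls_self[OF a] by (rule someI)
  then show ?thesis unfolding Wcls_wact by blast
qed

lemma piW_Wcls: "a \<in> topspace PD \<Longrightarrow> piW (Wcls act a) = fst (fst a)"
proof -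
  assume a: "a \<in> topspace PD"
  obtain \<sigma> where "(SOME b. b \<in> Wcls act a) = wact act a \<sigma>" using Wcls_some[OF a] by blast
  then show ?thesis unfolding piW_def wact_def by simp
qed

lemma evW_Wcls: "a \<in> topspace PD \<Longrightarrow> evW (Wcls act a) = snd (snd (fst a)) (snd a)"
proof -
  assume a: "a \<in> topspace PD"
  obtain \<sigma> where s: "\<sigma> \<in> Aut" "(SOME b. b \<in> Wcls act a) = wact act a \<sigma>" using Wcls_some[OF a] by blast
  obtain y e x n where ap: "a = ((y, e, x), n)" by (metis prod.collapse)
  have "evW (Wcls act a) = (x \<circ> \<sigma>) (inv \<sigma> n)"
    unfolding evW_def s(2) unfolding ap wact_def ract_def by simp
  also have "\<dots> = x n" using Aut_rinv_app[OF s(1)] by simp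
  finally show ?thesis unfolding ap by simp
qed

lemma continuous_piW: "continuous_map WW Y piW"
  unfolding W_top_def
proof (rule continuous_map_from_qtop)
  have "continuous_map PD Y (\<lambda>a. fst (fst a))"
  proof -
    have "continuous_map PD PP fst" by (rule continuous_map_fst)
    moreover have "continuous_map PP Y fst"
      unfolding Pg_top_def by (intro continuous_map_from_subtopology continuous_map_fst)
    ultimately have "continuous_map PD Y (fst \<circ> fst)" by (rule continuous_map_compose)
    then show ?thesis by (simp only: o_def)
  qed
  then show "continuous_map PD Y (\<lambda>a. piW (Wcls act a))"
    by (rule continuous_map_eq) (simp add: piW_Wcls)
qed

lemma continuous_coordPP: "continuous_map PP euclidean (\<lambda>b. snd (snd b) m)"
proof -
  have "continuous_map (prod_topology Y (TT EG)) (TT EG) snd" by (rule continuous_map_snd)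
  moreover have "continuous_map (TT EG) Xtop snd" by (rule continuous_map_snd)
  ultimately have "continuous_map (prod_topology Y (TT EG)) Xtop (snd \<circ> snd)" by (rule continuous_map_compose)
  then have "continuous_map (prod_topology Y (TT EG)) euclidean ((\<lambda>x. x m) \<circ> (snd \<circ> snd))"
    using continuous_map_coord by (rule continuous_map_compose)
  then have "continuous_map (prod_topology Y (TT EG)) euclidean (\<lambda>b. snd (snd b) m)" by (simp only: o_def)
  then show ?thesis unfolding Pg_top_def by (rule continuous_map_from_subtopology)
qed

lemma continuous_evW: "continuous_map WW euclidean evW"
  unfolding W_top_def
proof (rule continuous_map_from_qtop)
  have "continuous_map PD euclidean (\<lambda>a. snd (snd (fst a)) (snd a))"
    unfolding continuous_map_def
  proof (intro conjI allI impI)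
    show "(\<lambda>a. snd (snd (fst a)) (snd a)) \<in> topspace PD \<rightarrow> topspace euclidean" by simp
    fix U :: "complex set" assume "openin euclidean U"
    have eq: "{a \<in> topspace PD. snd (snd (fst a)) (snd a) \<in> U} =
       (\<Union>m. {b \<in> topspace PP. snd (snd b) m \<in> U} \<times> {m})" by auto
    have "openin PD ({b \<in> topspace PP. snd (snd b) m \<in> U} \<times> {m})" for m
      using openin_continuous_map_preimage[OF continuous_coordPP \<open>openin euclidean U\<close>]
      by (simp add: openin_prod_Times_iff)
    then show "openin PD {a \<in> topspace PD. snd (snd (fst a)) (snd a) \<in> U}" unfolding eq by blast
  qed
  then show "continuous_map PD euclidean (\<lambda>a. evW (Wcls act a))"
    by (rule continuous_map_eq) (simp add: evW_Wcls)
qed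

end

definition Ysl :: "'y topology \<Rightarrow> ('e \<Rightarrow> (nat \<Rightarrow> nat) \<Rightarrow> 'e) \<Rightarrow> ('y \<Rightarrow> ('e \<times> (nat \<Rightarrow> complex)) set)
   \<Rightarrow> ('e \<times> (nat \<Rightarrow> complex)) set \<Rightarrow> 'y set" where
  "Ysl Y act g Ob = {y \<in> topspace Y. g y \<in> cls act ` Ob}"

definition ssec :: "('e \<Rightarrow> (nat \<Rightarrow> nat) \<Rightarrow> 'e) \<Rightarrow> ('y \<Rightarrow> ('e \<times> (nat \<Rightarrow> complex)) set)
   \<Rightarrow> ('e \<times> (nat \<Rightarrow> complex)) set \<Rightarrow> 'y \<Rightarrow> 'e \<times> (nat \<Rightarrow> complex)" where
  "ssec act g Ob y = (SOME p. p \<in> Ob \<and> cls act p = g y)"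

definition sheet where
  "sheet Y act g Ob n = (\<lambda>y. Wcls act ((y, ssec act g Ob y), n)) ` Ysl Y act g Ob"

context
  fixes Y :: "'y topology" and EG :: "'e topology" and act :: "'e \<Rightarrow> (nat \<Rightarrow> nat) \<Rightarrow> 'e"
    and g :: "'y \<Rightarrow> ('e \<times> (nat \<Rightarrow> complex)) set" and Ob :: "('e \<times> (nat \<Rightarrow> complex)) set"
  assumes EG: "EG_space EG act"
    and g: "continuous_map Y (XG_top EG act) g"
    and Ob: "openin (TT EG) Ob"
    and slice0: "\<forall>o1\<in>Ob. \<forall>\<sigma>\<in>Aut. ract act o1 \<sigma> \<in> Ob \<longrightarrow> \<sigma> = id"
begin

lemma slice: "o1 \<in> Ob \<Longrightarrow> \<sigma> \<in> Aut \<Longrightarrow> ract act o1 \<sigma> \<in> Ob \<Longrightarrow> \<sigma> = id"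
  using slice0 by blast

abbreviation "YS \<equiv> Ysl Y act g Ob"
abbreviation "ss \<equiv> ssec act g Ob"
abbreviation "kk n \<equiv> (\<lambda>y. Wcls act ((y, ss y), n))"

lemma Ob_sub: "Ob \<subseteq> topspace (TT EG)" using openin_subset[OF Ob] .

lemma inj_slice: "o1 \<in> Ob \<Longrightarrow> o2 \<in> Ob \<Longrightarrow> cls act o1 = cls act o2 \<Longrightarrow> o1 = o2"
proof -
  assume o1: "o1 \<in> Ob" and o2: "o2 \<in> Ob" and eq: "cls act o1 = cls act o2"
  obtain \<sigma> where s: "\<sigma> \<in> Aut" "o2 = ract act o1 \<sigma>" using cls_eq_iff[OF EG, of o1 o2] Ob_sub o1 o2 eq by blast
  then have sid: "\<sigma> = id" using slice[OF o1 s(1)] o2 by simp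
  have "o1 \<in> topspace (TT EG)" using Ob_sub o1 by blast
  then show ?thesis using s(2) sid ract_id[OF EG] by simp
qed

lemma YS_open: "openin Y YS"
  unfolding Ysl_def by (rule openin_continuous_map_preimage[OF g cls_open_image[OF EG Ob]])

lemma YS_sub: "YS \<subseteq> topspace Y" unfolding Ysl_def by blast

lemma ss_prop: "y \<in> YS \<Longrightarrow> ss y \<in> Ob \<and> cls act (ss y) = g y"
proof -
  assume "y \<in> YS"
  then have "g y \<in> cls act ` Ob" unfolding Ysl_def by simp
  then obtain p where "p \<in> Ob" "g y = cls act p" by (rule imageE)
  then have "\<exists>p. p \<in> Ob \<and> cls act p = g y" by (intro exI[of _ p]) simp
  then show ?thesis unfolding ssec_def by (rule someI_ex)
qed

lemma ss_unique: "y \<in> YS \<Longrightarrow> o1 \<in> Ob \<Longrightarrow> cls act o1 = g y \<Longrightarrow> ss y = o1"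
proof -
  assume y: "y \<in> YS" and o1: "o1 \<in> Ob" and c: "cls act o1 = g y"
  have "ss y \<in> Ob" "cls act (ss y) = g y" using ss_prop[OF y] by auto
  then show ?thesis using inj_slice[OF _ o1] c by simp
qed

lemma continuous_ss: "continuous_map (subtopology Y YS) (TT EG) ss"
  unfolding continuous_map_def
proof (intro conjI allI impI)
  show "ss \<in> topspace (subtopology Y YS) \<rightarrow> topspace (TT EG)"
  proof
    fix y assume "y \<in> topspace (subtopology Y YS)"
    then have "y \<in> YS" by simp
    then show "ss y \<in> topspace (TT EG)" using ss_prop Ob_sub by blast
  qed
  fix U assume U: "openin (TT EG) U"
  have eq: "{y \<in> topspace (subtopology Y YS). ss y \<in> U} = {y \<in> topspace Y. g y \<in> cls act ` (U \<inter> Ob)}"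
  proof (intro set_eqI iffI)
    fix y assume "y \<in> {y \<in> topspace (subtopology Y YS). ss y \<in> U}"
    then have y: "y \<in> YS" "ss y \<in> U" by auto
    have "ss y \<in> U \<inter> Ob" "g y = cls act (ss y)" using ss_prop[OF y(1)] y(2) by auto
    then have "g y \<in> cls act ` (U \<inter> Ob)" by (rule rev_image_eqI)
    moreover have "y \<in> topspace Y" using y(1) YS_sub by blast
    ultimately show "y \<in> {y \<in> topspace Y. g y \<in> cls act ` (U \<inter> Ob)}" by simp
  next
    fix y assume "y \<in> {y \<in> topspace Y. g y \<in> cls act ` (U \<inter> Ob)}"
    then obtain o1 where y: "y \<in> topspace Y" "o1 \<in> U" "o1 \<in> Ob" "g y = cls act o1" by blast
    then have yS: "y \<in> YS" unfolding Ysl_def by blast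
    then have "ss y = o1" using ss_unique y by simp
    then show "y \<in> {y \<in> topspace (subtopology Y YS). ss y \<in> U}" using y yS by simp
  qed
  have op: "openin Y {y \<in> topspace Y. g y \<in> cls act ` (U \<inter> Ob)}"
    by (rule openin_continuous_map_preimage[OF g cls_open_image[OF EG openin_Int[OF U Ob]]])
  have sub: "{y \<in> topspace Y. g y \<in> cls act ` (U \<inter> Ob)} \<subseteq> YS" unfolding Ysl_def by blast
  show "openin (subtopology Y YS) {y \<in> topspace (subtopology Y YS). ss y \<in> U}"
    unfolding eq using openin_subtopology_Int2[OF op, of YS] sub by (simp add: Int_absorb1)
qed

lemma PP_in: "y \<in> YS \<Longrightarrow> (y, ss y) \<in> topspace (PP Y EG act g)"
  unfolding topspace_PP[OF EG g] using ss_prop YS_sub Ob_sub by auto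

lemma PD_in: "y \<in> YS \<Longrightarrow> ((y, ss y), n) \<in> topspace (PD Y EG act g)"
  using PP_in by simp

lemma continuous_secPD: "continuous_map (subtopology Y YS) (PD Y EG act g) (\<lambda>y. ((y, ss y), n))"
proof -
  have "continuous_map (subtopology Y YS) (prod_topology Y (TT EG)) (\<lambda>y. (y, ss y))"
    by (intro continuous_map_pairedI continuous_ss) (simp add: continuous_map_from_subtopology)
  moreover have "(\<lambda>y. (y, ss y)) \<in> topspace (subtopology Y YS) \<rightarrow>
      {(y, p). y \<in> topspace Y \<and> p \<in> topspace (TT EG) \<and> g y = cls act p}"
    using PP_in unfolding topspace_PP[OF EG g] by auto
  ultimately have "continuous_map (subtopology Y YS) (PP Y EG act g) (\<lambda>y. (y, ss y))"
    unfolding Pg_top_def continuous_map_in_subtopology by blast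
  moreover have "continuous_map (subtopology Y YS) (discrete_topology UNIV) (\<lambda>y. n)" by simp
  ultimately show ?thesis by (intro continuous_map_pairedI)
qed

lemma continuous_kk: "continuous_map (subtopology Y YS) (WW Y EG act g) (kk n)"
proof -
  have "continuous_map (subtopology Y YS) (WW Y EG act g) (Wcls act \<circ> (\<lambda>y. ((y, ss y), n)))"
    using continuous_secPD continuous_map_qtop unfolding W_top_def by (rule continuous_map_compose)
  then show ?thesis by (simp add: o_def)
qed

lemma piW_kk: "y \<in> YS \<Longrightarrow> piW (kk n y) = y"
  using piW_Wcls[OF EG g PD_in] by simp

lemma sheet_char:
  assumes a: "a \<in> topspace (PD Y EG act g)"
  shows "Wcls act a \<in> sheet Y act g Ob n \<longleftrightarrow> fst (fst a) \<in> YS \<and>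
     (\<exists>\<sigma>\<in>Aut. snd (fst a) = ract act (ss (fst (fst a))) \<sigma> \<and> snd a = inv \<sigma> n)"
proof
  assume "Wcls act a \<in> sheet Y act g Ob n"
  then obtain y where y: "y \<in> YS" "Wcls act a = kk n y" unfolding sheet_def by blast
  then obtain \<sigma> where s: "\<sigma> \<in> Aut" "a = wact act ((y, ss y), n) \<sigma>"
    using Wcls_eq_iff[OF EG g PD_in[OF y(1)] a] by metis
  then show "fst (fst a) \<in> YS \<and> (\<exists>\<sigma>\<in>Aut. snd (fst a) = ract act (ss (fst (fst a))) \<sigma> \<and> snd a = inv \<sigma> n)"
    using y(1) unfolding wact_def by auto
next
  assume "fst (fst a) \<in> YS \<and> (\<exists>\<sigma>\<in>Aut. snd (fst a) = ract act (ss (fst (fst a))) \<sigma> \<and> snd a = inv \<sigma> n)"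
  then obtain \<sigma> where y: "fst (fst a) \<in> YS" and s: "\<sigma> \<in> Aut" "snd (fst a) = ract act (ss (fst (fst a))) \<sigma>" "snd a = inv \<sigma> n"
    by blast
  define y where "y = fst (fst a)"
  have "a = wact act ((y, ss y), n) \<sigma>" unfolding wact_def y_def using s by (simp add: prod_eq_iff)
  then have "Wcls act a = kk n y" using Wcls_eq_iff[OF EG g PD_in[OF y[folded y_def]] a] s(1) by metis
  then show "Wcls act a \<in> sheet Y act g Ob n" unfolding sheet_def using y y_def by blast
qed

lemma sheet_sub: "sheet Y act g Ob n \<subseteq> topspace (WW Y EG act g)"
  unfolding sheet_def topspace_WW[OF EG g] using PD_in by blast

lemma sheet_open: "openin (WW Y EG act g) (sheet Y act g Ob n)"
proof -
  let ?R = "\<lambda>\<sigma>. (\<lambda>p. ract act p \<sigma>) ` Ob"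
  have eq: "{a \<in> topspace (PD Y EG act g). Wcls act a \<in> sheet Y act g Ob n} =
     (\<Union>\<sigma>\<in>Aut. {b \<in> topspace (PP Y EG act g). fst b \<in> YS \<and> snd b \<in> ?R \<sigma>} \<times> {inv \<sigma> n})"
  proof (intro set_eqI iffI)
    fix a assume "a \<in> {a \<in> topspace (PD Y EG act g). Wcls act a \<in> sheet Y act g Ob n}"
    then have a: "a \<in> topspace (PD Y EG act g)" and w: "Wcls act a \<in> sheet Y act g Ob n" by auto
    obtain \<sigma> where y: "fst (fst a) \<in> YS" and s: "\<sigma> \<in> Aut" "snd (fst a) = ract act (ss (fst (fst a))) \<sigma>" "snd a = inv \<sigma> n"
      using sheet_char[OF a] w by blast
    have "snd (fst a) \<in> ?R \<sigma>" using s(2) ss_prop[OF y] by blast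
    then show "a \<in> (\<Union>\<sigma>\<in>Aut. {b \<in> topspace (PP Y EG act g). fst b \<in> YS \<and> snd b \<in> ?R \<sigma>} \<times> {inv \<sigma> n})"
      using a y s by (auto simp: mem_Times_iff)
  next
    fix a assume "a \<in> (\<Union>\<sigma>\<in>Aut. {b \<in> topspace (PP Y EG act g). fst b \<in> YS \<and> snd b \<in> ?R \<sigma>} \<times> {inv \<sigma> n})"
    then obtain \<sigma> o1 where s: "\<sigma> \<in> Aut" and b: "fst a \<in> topspace (PP Y EG act g)" "fst (fst a) \<in> YS"
      and o1: "o1 \<in> Ob" "snd (fst a) = ract act o1 \<sigma>" and m: "snd a = inv \<sigma> n"
      by (auto simp: mem_Times_iff)
    have a: "a \<in> topspace (PD Y EG act g)" using b by (simp add: mem_Times_iff)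
    have pT: "snd (fst a) \<in> topspace (TT EG)" and gy: "g (fst (fst a)) = cls act (snd (fst a))"
      using b(1) unfolding topspace_PP[OF EG g] by auto
    have o1T: "o1 \<in> topspace (TT EG)" using o1 Ob_sub by blast
    have "cls act o1 = cls act (snd (fst a))" using cls_eq_iff[OF EG o1T pT] s o1 by blast
    then have "ss (fst (fst a)) = o1" using ss_unique[OF b(2) o1(1)] gy by simp
    then have "fst (fst a) \<in> YS \<and> (\<exists>\<sigma>\<in>Aut. snd (fst a) = ract act (ss (fst (fst a))) \<sigma> \<and> snd a = inv \<sigma> n)"
      using b(2) s o1 m by blast
    then show "a \<in> {a \<in> topspace (PD Y EG act g). Wcls act a \<in> sheet Y act g Ob n}"
      using sheet_char[OF a] a by blast
  qed
  have "openin (PD Y EG act g) ({b \<in> topspace (PP Y EG act g). fst b \<in> YS \<and> snd b \<in> ?R \<sigma>} \<times> {inv \<sigma> n})"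
    if s: "\<sigma> \<in> Aut" for \<sigma>
  proof -
    have R: "openin (TT EG) (?R \<sigma>)" using ract_image_open[OF EG s Ob] .
    have "openin (prod_topology Y (TT EG)) (YS \<times> ?R \<sigma>)"
      using YS_open R by (simp add: openin_prod_Times_iff)
    then have "openin (PP Y EG act g) ((YS \<times> ?R \<sigma>) \<inter> {(y, p). y \<in> topspace Y \<and> p \<in> topspace (TT EG) \<and> g y = cls act p})"
      unfolding Pg_top_def openin_subtopology by blast
    moreover have "(YS \<times> ?R \<sigma>) \<inter> {(y, p). y \<in> topspace Y \<and> p \<in> topspace (TT EG) \<and> g y = cls act p}
        = {b \<in> topspace (PP Y EG act g). fst b \<in> YS \<and> snd b \<in> ?R \<sigma>}"
      unfolding topspace_PP[OF EG g] by auto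
    ultimately show ?thesis by (simp add: openin_prod_Times_iff)
  qed
  then have "openin (PD Y EG act g) {a \<in> topspace (PD Y EG act g). Wcls act a \<in> sheet Y act g Ob n}"
    unfolding eq by blast
  then show ?thesis unfolding W_top_def openin_qtop using sheet_sub[unfolded topspace_WW[OF EG g]] by blast
qed

lemma sheet_union: "\<Union>(range (sheet Y act g Ob)) = {w \<in> topspace (WW Y EG act g). piW w \<in> YS}"
proof (intro set_eqI iffI)
  fix w assume "w \<in> \<Union>(range (sheet Y act g Ob))"
  then obtain n y where y: "y \<in> YS" "w = kk n y" unfolding sheet_def by blast
  have "w \<in> sheet Y act g Ob n" unfolding sheet_def using y by (rule rev_image_eqI) 
  then have "w \<in> topspace (WW Y EG act g)" using sheet_sub by blast
  moreover have "piW w \<in> YS" using y piW_kk by simp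
  ultimately show "w \<in> {w \<in> topspace (WW Y EG act g). piW w \<in> YS}" by simp
next
  fix w assume "w \<in> {w \<in> topspace (WW Y EG act g). piW w \<in> YS}"
  then obtain a where a: "a \<in> topspace (PD Y EG act g)" "w = Wcls act a" and yS: "piW w \<in> YS"
    unfolding topspace_WW[OF EG g] by blast
  have y: "fst (fst a) \<in> YS" using yS piW_Wcls[OF EG g a(1)] a(2) by simp
  have fa: "fst a \<in> topspace (PP Y EG act g)" using a(1) by (auto simp: mem_Times_iff)
  have pT: "snd (fst a) \<in> topspace (TT EG)" and gy: "g (fst (fst a)) = cls act (snd (fst a))"
    using fa unfolding topspace_PP[OF EG g] by auto
  have sT: "ss (fst (fst a)) \<in> topspace (TT EG)" using ss_prop[OF y] Ob_sub by blast
  have "cls act (ss (fst (fst a))) = cls act (snd (fst a))" using ss_prop[OF y] gy by simp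
  then obtain \<sigma> where s: "\<sigma> \<in> Aut" "snd (fst a) = ract act (ss (fst (fst a))) \<sigma>"
    using cls_eq_iff[OF EG sT pT] by blast
  have "snd a = inv \<sigma> (\<sigma> (snd a))" using Aut_linv_app[OF s(1)] by simp
  then have "fst (fst a) \<in> YS \<and> (\<exists>\<tau>\<in>Aut. snd (fst a) = ract act (ss (fst (fst a))) \<tau> \<and> snd a = inv \<tau> (\<sigma> (snd a)))"
    using y s by blast
  then have "Wcls act a \<in> sheet Y act g Ob (\<sigma> (snd a))" using sheet_char[OF a(1)] by blast
  then show "w \<in> \<Union>(range (sheet Y act g Ob))" using a(2) by (intro UnionI[OF rangeI]) simp
qed

lemma sheet_disj: "w \<in> sheet Y act g Ob n \<Longrightarrow> w \<in> sheet Y act g Ob m \<Longrightarrow> n = m"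
proof -
  assume wn: "w \<in> sheet Y act g Ob n" and wm: "w \<in> sheet Y act g Ob m"
  obtain y where y: "y \<in> YS" "w = kk n y" using wn unfolding sheet_def by blast
  have "Wcls act ((y, ss y), n) \<in> sheet Y act g Ob m" using wm y by simp
  then have "\<exists>\<sigma>\<in>Aut. ss y = ract act (ss y) \<sigma> \<and> n = inv \<sigma> m"
    using sheet_char[OF PD_in[OF y(1)]] by simp
  then obtain \<sigma> where s: "\<sigma> \<in> Aut" "ss y = ract act (ss y) \<sigma>" "n = inv \<sigma> m" by blast
  have sy: "ss y \<in> Ob" using ss_prop[OF y(1)] by blast
  have "\<sigma> = id" using slice[OF sy s(1)] sy s(2) by simp
  then show "n = m" using s(3) by (simp add: inv_id)
qed

lemma sheet_homeo: "homeomorphic_map (subtopology (WW Y EG act g) (sheet Y act g Ob n)) (subtopology Y YS) piW"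
proof (rule bijective_open_imp_homeomorphic_map)
  have sh: "sheet Y act g Ob n = kk n ` YS" unfolding sheet_def ..
  have img: "piW ` sheet Y act g Ob n = YS"
    unfolding sh image_comp o_def using piW_kk by simp
  show "continuous_map (subtopology (WW Y EG act g) (sheet Y act g Ob n)) (subtopology Y YS) piW"
    unfolding continuous_map_in_subtopology
  proof
    show "continuous_map (subtopology (WW Y EG act g) (sheet Y act g Ob n)) Y piW"
      using continuous_map_from_subtopology[OF continuous_piW[OF EG g]] .
    have "piW ` topspace (subtopology (WW Y EG act g) (sheet Y act g Ob n)) \<subseteq> YS" using img by auto
    then show "piW \<in> topspace (subtopology (WW Y EG act g) (sheet Y act g Ob n)) \<rightarrow> YS" by blast
  qed
  show "piW ` topspace (subtopology (WW Y EG act g) (sheet Y act g Ob n)) = topspace (subtopology Y YS)"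
    using img sheet_sub YS_sub by (simp add: Int_absorb1 Int_absorb2)
  show "inj_on piW (topspace (subtopology (WW Y EG act g) (sheet Y act g Ob n)))"
  proof (rule inj_onI)
    fix u v assume u: "u \<in> topspace (subtopology (WW Y EG act g) (sheet Y act g Ob n))"
      and v: "v \<in> topspace (subtopology (WW Y EG act g) (sheet Y act g Ob n))" and e: "piW u = piW v"
    obtain y1 where y1: "y1 \<in> YS" "u = kk n y1" using u unfolding sh by auto
    obtain y2 where y2: "y2 \<in> YS" "v = kk n y2" using v unfolding sh by auto
    have "y1 = y2" using e y1 y2 piW_kk by simp
    then show "u = v" using y1 y2 by simp
  qed
  show "open_map (subtopology (WW Y EG act g) (sheet Y act g Ob n)) (subtopology Y YS) piW"
    unfolding open_map_def
  proof (intro allI impI)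
    fix U assume U: "openin (subtopology (WW Y EG act g) (sheet Y act g Ob n)) U"
    have UW: "openin (WW Y EG act g) U" using openin_trans_full[OF U sheet_open] .
    have Us: "U \<subseteq> sheet Y act g Ob n" using openin_subset[OF U] by simp
    have eq: "piW ` U = {y \<in> topspace (subtopology Y YS). kk n y \<in> U}"
    proof (intro set_eqI iffI)
      fix y assume "y \<in> piW ` U"
      then obtain u where u: "u \<in> U" "y = piW u" by blast
      then obtain y' where y': "y' \<in> YS" "u = kk n y'" using Us unfolding sh by blast
      have "y = y'" using u(2) y' piW_kk by simp
      then show "y \<in> {y \<in> topspace (subtopology Y YS). kk n y \<in> U}" using u y' YS_sub by auto
    next
      fix y assume "y \<in> {y \<in> topspace (subtopology Y YS). kk n y \<in> U}"
      then have "y \<in> YS" "kk n y \<in> U" by auto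
      then show "y \<in> piW ` U" using piW_kk by (metis image_eqI)
    qed
    show "openin (subtopology Y YS) (piW ` U)"
      unfolding eq by (rule openin_continuous_map_preimage[OF continuous_kk UW])
  qed
qed

end

lemma covering_transport:
  assumes cov: "covering_map C B p" and h: "homeomorphic_map C C' h"
    and eq: "\<And>c. c \<in> topspace C \<Longrightarrow> p' (h c) = p c"
  shows "covering_map C' B p'"
proof -
  obtain h' where hm: "homeomorphic_maps C C' h h'" using h[unfolded homeomorphic_map_maps] by (elim exE)
  have hc: "continuous_map C C' h" and h'c: "continuous_map C' C h'"
    and hh': "\<And>x. x \<in> topspace C \<Longrightarrow> h' (h x) = x" and h'h: "\<And>y. y \<in> topspace C' \<Longrightarrow> h (h' y) = y"
    using hm unfolding homeomorphic_maps_def by blast+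
  have h'in: "\<And>y. y \<in> topspace C' \<Longrightarrow> h' y \<in> topspace C" using h'c unfolding continuous_map_def by blast
  have hin: "\<And>x. x \<in> topspace C \<Longrightarrow> h x \<in> topspace C'" using hc unfolding continuous_map_def by blast
  have p'eq: "p' y = p (h' y)" if y: "y \<in> topspace C'" for y
  proof -
    have "p' y = p' (h (h' y))" using h'h[OF y] by simp
    also have "\<dots> = p (h' y)" using eq[OF h'in[OF y]] .
    finally show ?thesis .
  qed
  have pc: "continuous_map C B p" and psurj: "p ` topspace C = topspace B"
    and loc: "\<And>b. b \<in> topspace B \<Longrightarrow> \<exists>U. openin B U \<and> b \<in> U \<and>
        (\<exists>\<V>. \<Union>\<V> = {c \<in> topspace C. p c \<in> U} \<and> pairwise disjnt \<V> \<and>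
             (\<forall>V\<in>\<V>. openin C V \<and> homeomorphic_map (subtopology C V) (subtopology B U) p))"
    using cov unfolding covering_map_def by blast+
  have hsurj: "h ` topspace C = topspace C'" using homeomorphic_imp_surjective_map[OF h] .
  have hinj: "inj_on h (topspace C)" using homeomorphic_imp_injective_map[OF h] .
  have h'hom: "homeomorphic_map C' C h'" using homeomorphic_maps_imp_map[OF homeomorphic_maps_sym[THEN iffD1, OF hm]] .
  have "continuous_map C' B (p \<circ> h')" using h'c pc by (rule continuous_map_compose)
  then have c1: "continuous_map C' B p'" by (rule continuous_map_eq) (simp add: p'eq)
  have c2: "p' ` topspace C' = topspace B"
  proof -
    have "p' ` topspace C' = p' ` h ` topspace C" using hsurj by simp
    also have "\<dots> = (\<lambda>c. p' (h c)) ` topspace C" by (simp add: image_image)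
    also have "\<dots> = p ` topspace C" by (rule image_cong) (simp_all add: eq)
    finally show ?thesis using psurj by simp
  qed
  have c3: "\<exists>U. openin B U \<and> b \<in> U \<and>
        (\<exists>\<V>. \<Union>\<V> = {c \<in> topspace C'. p' c \<in> U} \<and> pairwise disjnt \<V> \<and>
             (\<forall>V\<in>\<V>. openin C' V \<and> homeomorphic_map (subtopology C' V) (subtopology B U) p'))"
    if b: "b \<in> topspace B" for b
  proof -
    obtain U where Uall: "openin B U \<and> b \<in> U \<and> (\<exists>\<V>. \<Union>\<V> = {c \<in> topspace C. p c \<in> U} \<and> pairwise disjnt \<V> \<and>
             (\<forall>V\<in>\<V>. openin C V \<and> homeomorphic_map (subtopology C V) (subtopology B U) p))"
      using loc[OF b] by (rule exE)
    have U: "openin B U" "b \<in> U" using Uall by simp_all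
    have ex: "\<exists>\<V>. \<Union>\<V> = {c \<in> topspace C. p c \<in> U} \<and> pairwise disjnt \<V> \<and>
             (\<forall>V\<in>\<V>. openin C V \<and> homeomorphic_map (subtopology C V) (subtopology B U) p)"
      using Uall by (elim conjE)
    obtain \<V> where V1: "\<Union>\<V> = {c \<in> topspace C. p c \<in> U}"
      and V2: "pairwise disjnt \<V>"
      and V3': "\<forall>V\<in>\<V>. openin C V \<and> homeomorphic_map (subtopology C V) (subtopology B U) p"
      using ex by (elim exE conjE) (rule that)
    have V3: "\<And>V. V \<in> \<V> \<Longrightarrow> openin C V \<and> homeomorphic_map (subtopology C V) (subtopology B U) p"
      using V3' by (rule bspec)
    define \<W> where "\<W> = (\<lambda>V. h ` V) ` \<V>"
    have W1: "\<Union>\<W> = {c \<in> topspace C'. p' c \<in> U}"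
    proof -
      have "\<Union>\<W> = h ` \<Union>\<V>" unfolding \<W>_def by blast
      also have "\<dots> = h ` {c \<in> topspace C. p c \<in> U}" using V1 by simp
      also have "\<dots> = {c \<in> topspace C'. p' c \<in> U}"
      proof (intro set_eqI iffI)
        fix c' assume "c' \<in> h ` {c \<in> topspace C. p c \<in> U}"
        then obtain c where "c \<in> topspace C" "p c \<in> U" "c' = h c" by blast
        then show "c' \<in> {c \<in> topspace C'. p' c \<in> U}" using hin eq by simp
      next
        fix c' assume c': "c' \<in> {c \<in> topspace C'. p' c \<in> U}"
        then have "h' c' \<in> topspace C" "p (h' c') \<in> U" using h'in p'eq by auto
        then have "h' c' \<in> {c \<in> topspace C. p c \<in> U}" by simp
        moreover have "c' = h (h' c')" using c' h'h by simp
        ultimately show "c' \<in> h ` {c \<in> topspace C. p c \<in> U}" by blast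
      qed
      finally show ?thesis .
    qed
    have W2: "pairwise disjnt \<W>"
      unfolding pairwise_def \<W>_def
    proof (intro ballI impI)
      fix A B assume A: "A \<in> (\<lambda>V. h ` V) ` \<V>" and B: "B \<in> (\<lambda>V. h ` V) ` \<V>" and ne: "A \<noteq> B"
      obtain V1 where V1: "V1 \<in> \<V>" "A = h ` V1" using A by blast
      obtain V2 where V2': "V2 \<in> \<V>" "B = h ` V2" using B by blast
      have "V1 \<noteq> V2" using ne V1 V2' by blast
      then have d: "disjnt V1 V2" using V2 V1(1) V2'(1) unfolding pairwise_def by blast
      have s1: "V1 \<subseteq> topspace C" using V3[OF V1(1)] openin_subset by blast
      have s2: "V2 \<subseteq> topspace C" using V3[OF V2'(1)] openin_subset by blast
      show "disjnt A B" unfolding V1(2) V2'(2) disjnt_def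
      proof (rule equals0I)
        fix z assume "z \<in> h ` V1 \<inter> h ` V2"
        then obtain z1 z2 where z: "z1 \<in> V1" "z2 \<in> V2" "h z1 = h z2" by blast
        then have "z1 = z2" using hinj s1 s2 unfolding inj_on_def by blast
        then show False using z d unfolding disjnt_def by blast
      qed
    qed
    have W3: "openin C' W \<and> homeomorphic_map (subtopology C' W) (subtopology B U) p'" if W: "W \<in> \<W>" for W
    proof -
      obtain V where V: "V \<in> \<V>" "W = h ` V" using W unfolding \<W>_def by blast
      have Vo: "openin C V" and Vh: "homeomorphic_map (subtopology C V) (subtopology B U) p" using V3[OF V(1)] by auto
      have Vs: "V \<subseteq> topspace C" using openin_subset[OF Vo] .
      have o: "openin C' W" unfolding V(2) using homeomorphic_map_openness[OF h Vs] Vo by simp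
      have "h' ` (topspace C' \<inter> h ` V) = topspace C \<inter> V"
      proof (intro set_eqI iffI)
        fix x assume "x \<in> h' ` (topspace C' \<inter> h ` V)"
        then obtain v where "v \<in> V" "x = h' (h v)" by blast
        then show "x \<in> topspace C \<inter> V" using hh' Vs by auto
      next
        fix x assume x: "x \<in> topspace C \<inter> V"
        then have "x = h' (h x)" using hh' by simp
        moreover have "h x \<in> topspace C' \<inter> h ` V" using x hin by blast
        ultimately show "x \<in> h' ` (topspace C' \<inter> h ` V)" by blast
      qed
      then have "homeomorphic_map (subtopology C' (h ` V)) (subtopology C V) h'"
        using homeomorphic_map_subtopologies[OF h'hom] by blast
      then have "homeomorphic_map (subtopology C' (h ` V)) (subtopology B U) (p \<circ> h')"
        using Vh by (rule homeomorphic_map_compose)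
      then have "homeomorphic_map (subtopology C' W) (subtopology B U) p'"
        unfolding V(2) by (rule homeomorphic_map_eq) (simp add: p'eq)
      then show ?thesis using o by simp
    qed
    have W3': "\<forall>W\<in>\<W>. openin C' W \<and> homeomorphic_map (subtopology C' W) (subtopology B U) p'" using W3 by blast
    have "\<exists>\<V>. \<Union>\<V> = {c \<in> topspace C'. p' c \<in> U} \<and> pairwise disjnt \<V> \<and>
             (\<forall>V\<in>\<V>. openin C' V \<and> homeomorphic_map (subtopology C' V) (subtopology B U) p')"
      by (rule exI[of _ \<W>]) (intro conjI W1 W2 W3')
    then show ?thesis using U by (intro exI[of _ U] conjI)
  qed
  show ?thesis unfolding covering_map_def by (intro conjI c1 c2 ballI c3)
qed

context
  fixes Y :: "'y topology" and EG :: "'e topology" and act :: "'e \<Rightarrow> (nat \<Rightarrow> nat) \<Rightarrow> 'e"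
    and g :: "'y \<Rightarrow> ('e \<times> (nat \<Rightarrow> complex)) set"
  assumes EG: "EG_space EG act"
    and g: "continuous_map Y (XG_top EG act) g"
begin

lemma covering_piW: "covering_map (WW Y EG act g) Y piW"
proof -
  have c2: "piW ` topspace (WW Y EG act g) = topspace Y"
  proof (intro set_eqI iffI)
    fix y assume "y \<in> piW ` topspace (WW Y EG act g)"
    then show "y \<in> topspace Y" using continuous_piW[OF EG g] unfolding continuous_map_def by blast
  next
    fix y assume y: "y \<in> topspace Y"
    obtain p where p: "p \<in> topspace (TT EG)" "g y = cls act p" using g_cls[OF EG g y] by blast
    have "(y, p) \<in> topspace (PP Y EG act g)" unfolding topspace_PP[OF EG g] using y p by simp
    then have a: "((y, p), 0) \<in> topspace (PD Y EG act g)" by simp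
    then have "Wcls act ((y, p), 0) \<in> topspace (WW Y EG act g)" unfolding topspace_WW[OF EG g] by blast
    moreover have "piW (Wcls act ((y, p), 0)) = y" using piW_Wcls[OF EG g a] by simp
    ultimately show "y \<in> piW ` topspace (WW Y EG act g)" by (metis image_eqI)
  qed
  have c3: "\<exists>U. openin Y U \<and> b \<in> U \<and>
        (\<exists>\<V>. \<Union>\<V> = {c \<in> topspace (WW Y EG act g). piW c \<in> U} \<and> pairwise disjnt \<V> \<and>
             (\<forall>V\<in>\<V>. openin (WW Y EG act g) V \<and> homeomorphic_map (subtopology (WW Y EG act g) V) (subtopology Y U) piW))"
    if b: "b \<in> topspace Y" for b
  proof -
    obtain p0 where p0: "p0 \<in> topspace (TT EG)" "g b = cls act p0" using g_cls[OF EG g b] by blast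
    obtain Ob where Ob: "openin (TT EG) Ob" "p0 \<in> Ob" and sl: "\<forall>o1\<in>Ob. \<forall>\<sigma>\<in>Aut. ract act o1 \<sigma> \<in> Ob \<longrightarrow> \<sigma> = id"
      using local_slice[OF EG p0(1)] by blast
    have sl': "\<And>o1 \<sigma>. o1 \<in> Ob \<Longrightarrow> \<sigma> \<in> Aut \<Longrightarrow> ract act o1 \<sigma> \<in> Ob \<Longrightarrow> \<sigma> = id" using sl by blast
    have bU: "b \<in> Ysl Y act g Ob" unfolding Ysl_def using b p0 Ob by blast
    have "pairwise disjnt (range (sheet Y act g Ob))"
      unfolding pairwise_def
    proof (intro ballI impI)
      fix A B assume A: "A \<in> range (sheet Y act g Ob)" and B: "B \<in> range (sheet Y act g Ob)" and ne: "A \<noteq> B"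
      obtain n m where nm: "A = sheet Y act g Ob n" "B = sheet Y act g Ob m" using A B by blast
      show "disjnt A B" unfolding disjnt_def
      proof (rule equals0I)
        fix w assume "w \<in> A \<inter> B"
        then have "n = m" using sheet_disj[OF EG g Ob(1) sl] nm by blast
        then show False using ne nm by simp
      qed
    qed
    moreover have "\<forall>V\<in>range (sheet Y act g Ob). openin (WW Y EG act g) V \<and>
        homeomorphic_map (subtopology (WW Y EG act g) V) (subtopology Y (Ysl Y act g Ob)) piW"
      using sheet_open[OF EG g Ob(1) sl] sheet_homeo[OF EG g Ob(1) sl] by blast
    ultimately show ?thesis
      by (intro exI[of _ "Ysl Y act g Ob"] conjI YS_open[OF EG g Ob(1) sl] bU
          exI[of _ "range (sheet Y act g Ob)"] sheet_union[OF EG g Ob(1) sl])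
  qed
  show ?thesis unfolding covering_map_def by (intro conjI continuous_piW[OF EG g] c2 ballI c3)
qed

end

context
  fixes Y :: "'y topology" and EG :: "'e topology" and act :: "'e \<Rightarrow> (nat \<Rightarrow> nat) \<Rightarrow> 'e"
    and g :: "'y \<Rightarrow> ('e \<times> (nat \<Rightarrow> complex)) set"
  assumes EG: "EG_space EG act"
    and g: "continuous_map Y (XG_top EG act) g"
begin

lemma PD_elim: "((y, p), m) \<in> topspace (PD Y EG act g) \<Longrightarrow> y \<in> topspace Y \<and> p \<in> topspace (TT EG) \<and> g y = cls act p"
proof -
  assume "((y, p), m) \<in> topspace (PD Y EG act g)"
  then have "(y, p) \<in> topspace (PP Y EG act g)" by simp
  then show ?thesis unfolding topspace_PP[OF EG g] by simp
qed

lemma iota_Wcls: "a \<in> topspace (PD Y EG act g) \<Longrightarrow> iotaW (Wcls act a) = (fst (fst a), snd (snd (fst a)) (snd a))"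
  unfolding iotaW_def using piW_Wcls[OF EG g] evW_Wcls[OF EG g] by simp

lemma Pbar_g: "y \<in> topspace Y \<Longrightarrow> p \<in> topspace (TT EG) \<Longrightarrow> g y = cls act p \<Longrightarrow> Pbar (g y) = range (snd p)"
  using Pbar_cls[OF EG] unfolding Pmap_def by simp

lemma Eg_char: "Eg Y EG act g = {(y, z). y \<in> topspace Y \<and> z \<in> Pbar (g y)}"
proof (intro set_eqI iffI)
  fix q assume "q \<in> Eg Y EG act g"
  then obtain a where a: "a \<in> topspace (PD Y EG act g)" "q = iotaW (Wcls act a)"
    unfolding Eg_def topspace_WW[OF EG g] by blast
  obtain y p m where ap: "a = ((y, p), m)" by (metis prod.collapse)
  have y: "y \<in> topspace Y" and p: "p \<in> topspace (TT EG)" and gy: "g y = cls act p"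
    using PD_elim a(1) unfolding ap by blast+
  have "q = (y, snd p m)" using iota_Wcls[OF a(1)] a(2) ap by simp
  moreover have "snd p m \<in> Pbar (g y)" using Pbar_g[OF y p gy] by simp
  ultimately show "q \<in> {(y, z). y \<in> topspace Y \<and> z \<in> Pbar (g y)}" using y by simp
next
  fix q assume "q \<in> {(y, z). y \<in> topspace Y \<and> z \<in> Pbar (g y)}"
  then obtain y z where q: "q = (y, z)" and y: "y \<in> topspace Y" and z: "z \<in> Pbar (g y)" by blast
  obtain p where p: "p \<in> topspace (TT EG)" "g y = cls act p" using g_cls[OF EG g y] by blast
  obtain m where m: "z = snd p m" using z Pbar_g[OF y p] by auto
  have "(y, p) \<in> topspace (PP Y EG act g)" unfolding topspace_PP[OF EG g] using y p by simp
  then have a: "((y, p), m) \<in> topspace (PD Y EG act g)" by simp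
  then have "Wcls act ((y, p), m) \<in> topspace (WW Y EG act g)" unfolding topspace_WW[OF EG g] by blast
  moreover have "iotaW (Wcls act ((y, p), m)) = q" using iota_Wcls[OF a] q m by simp
  ultimately show "q \<in> Eg Y EG act g" unfolding Eg_def by (metis image_eqI)
qed

lemma iota_inj: "inj_on iotaW (topspace (WW Y EG act g))"
proof (rule inj_onI)
  fix u v assume u: "u \<in> topspace (WW Y EG act g)" and v: "v \<in> topspace (WW Y EG act g)" and e: "iotaW u = iotaW v"
  obtain a where a: "a \<in> topspace (PD Y EG act g)" "u = Wcls act a" using u unfolding topspace_WW[OF EG g] by blast
  obtain b where b: "b \<in> topspace (PD Y EG act g)" "v = Wcls act b" using v unfolding topspace_WW[OF EG g] by blast
  obtain y p n where ap: "a = ((y, p), n)" by (metis prod.collapse)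
  obtain y' p' m where bp: "b = ((y', p'), m)" by (metis prod.collapse)
  have p: "p \<in> topspace (TT EG)" and gy: "g y = cls act p" using PD_elim a(1) unfolding ap by blast+
  have p': "p' \<in> topspace (TT EG)" and gy': "g y' = cls act p'" using PD_elim b(1) unfolding bp by blast+
  have yy: "y' = y" and xx: "snd p n = snd p' m" using e iota_Wcls[OF a(1)] iota_Wcls[OF b(1)] a(2) b(2) ap bp by auto
  obtain \<sigma> where s: "\<sigma> \<in> Aut" "p' = ract act p \<sigma>" using cls_eq_iff[OF EG p p'] gy gy' yy by auto
  have "snd p \<in> Xset" using p by auto
  then have inj: "inj (snd p)" unfolding Xset_def by simp
  have "snd p n = snd p (\<sigma> m)" using xx s(2) by (simp add: ract_def)
  then have "n = \<sigma> m" using inj by (simp add: inj_eq)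
  then have "m = inv \<sigma> n" using Aut_linv_app[OF s(1)] by simp
  then have "b = wact act a \<sigma>" unfolding ap bp wact_def using yy s(2) by simp
  then have "Wcls act a = Wcls act b" using Wcls_eq_iff[OF EG g a(1) b(1)] s(1) by blast
  then show "u = v" using a b by simp
qed

lemma continuous_iota: "continuous_map (WW Y EG act g) (prod_topology Y euclidean) iotaW"
  unfolding iotaW_def by (intro continuous_map_pairedI continuous_piW[OF EG g] continuous_evW[OF EG g])

lemma Eg_sub: "Eg Y EG act g \<subseteq> topspace (prod_topology Y euclidean)"
  unfolding Eg_char by auto

lemma iota_open: "open_map (WW Y EG act g) (subtopology (prod_topology Y euclidean) (Eg Y EG act g)) iotaW"
  unfolding open_map_def
proof (intro allI impI)
  fix G assume G: "openin (WW Y EG act g) G"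
  have GW: "G \<subseteq> topspace (WW Y EG act g)" using openin_subset[OF G] .
  show "openin (subtopology (prod_topology Y euclidean) (Eg Y EG act g)) (iotaW ` G)"
  proof (subst openin_subopen, intro ballI)
    fix q assume "q \<in> iotaW ` G"
    then obtain w where w: "w \<in> G" "q = iotaW w" by blast
    obtain a where a: "a \<in> topspace (PD Y EG act g)" "w = Wcls act a" using w(1) GW unfolding topspace_WW[OF EG g] by blast
    obtain y0 p0 n0 where ap: "a = ((y0, p0), n0)" by (metis prod.collapse)
    have y0: "y0 \<in> topspace Y" and p0: "p0 \<in> topspace (TT EG)" and gy0: "g y0 = cls act p0"
      using PD_elim a(1) unfolding ap by blast+
    obtain Ob where Ob: "openin (TT EG) Ob" "p0 \<in> Ob" and sl: "\<forall>o1\<in>Ob. \<forall>\<sigma>\<in>Aut. ract act o1 \<sigma> \<in> Ob \<longrightarrow> \<sigma> = id"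
      using local_slice[OF EG p0] by blast
    have y0S: "y0 \<in> Ysl Y act g Ob" unfolding Ysl_def using y0 gy0 Ob(2) by blast
    have ss0: "ssec act g Ob y0 = p0" using ss_unique[OF EG g Ob(1) sl y0S Ob(2)] gy0 by simp
    have x0: "snd p0 \<in> Xset" using p0 by auto
    obtain N r where N: "openin Xtop N" "snd p0 \<in> N" "r > 0"
      and Nprop: "\<And>x. x \<in> N \<Longrightarrow> cmod (x n0 - snd p0 n0) < r \<and> (\<forall>j. cmod (x j - snd p0 n0) < r \<longrightarrow> j = n0)"
      using Xtop_isolate[OF x0, of n0] by blast
    let ?k = "\<lambda>y. Wcls act ((y, ssec act g Ob y), n0)"
    let ?S = "{y \<in> topspace (subtopology Y (Ysl Y act g Ob)). ?k y \<in> G \<and> snd (ssec act g Ob y) \<in> N}"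
    have kc: "continuous_map (subtopology Y (Ysl Y act g Ob)) (WW Y EG act g) ?k"
      using continuous_kk[OF EG g Ob(1) sl] .
    have sc: "continuous_map (subtopology Y (Ysl Y act g Ob)) Xtop (\<lambda>y. snd (ssec act g Ob y))"
    proof -
      have "continuous_map (subtopology Y (Ysl Y act g Ob)) Xtop (snd \<circ> ssec act g Ob)"
        using continuous_ss[OF EG g Ob(1) sl] continuous_map_snd by (rule continuous_map_compose)
      then show ?thesis by (simp add: o_def)
    qed
    have "?S = {y \<in> topspace (subtopology Y (Ysl Y act g Ob)). ?k y \<in> G} \<inter>
               {y \<in> topspace (subtopology Y (Ysl Y act g Ob)). snd (ssec act g Ob y) \<in> N}" by blast
    then have "openin (subtopology Y (Ysl Y act g Ob)) ?S"
      using openin_continuous_map_preimage[OF kc G] openin_continuous_map_preimage[OF sc N(1)] by auto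
    then have So: "openin Y ?S" using YS_open[OF EG g Ob(1) sl] by (rule openin_trans_full)
    define T where "T = Eg Y EG act g \<inter> (?S \<times> ball (snd p0 n0) r)"
    have "openin (prod_topology Y euclidean) (?S \<times> ball (snd p0 n0) r)"
      using So by (simp add: openin_prod_Times_iff)
    then have To: "openin (subtopology (prod_topology Y euclidean) (Eg Y EG act g)) T"
      unfolding T_def by (rule openin_subtopology_Int2)
    have wk: "?k y0 = w" using ss0 a(2) ap by simp
    have qi: "q = (y0, snd p0 n0)" using w(2) a ap iota_Wcls by simp
    have "q \<in> Eg Y EG act g" using w GW unfolding Eg_def by blast
    moreover have "y0 \<in> ?S" using y0 y0S wk w(1) ss0 N(2) by simp
    ultimately have qT: "q \<in> T" unfolding T_def using qi N(3) by simp
    have "T \<subseteq> iotaW ` G"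
    proof
      fix q' assume q': "q' \<in> T"
      then obtain y z where yz: "q' = (y, z)" by (metis prod.collapse)
      have yS: "y \<in> Ysl Y act g Ob" and kyG: "?k y \<in> G" and sN: "snd (ssec act g Ob y) \<in> N"
        using q' yz unfolding T_def by auto
      have zb: "dist (snd p0 n0) z < r" using q' yz unfolding T_def by auto
      have yY: "y \<in> topspace Y" and zP: "z \<in> Pbar (g y)" using q' yz unfolding T_def Eg_char by auto
      have sp: "ssec act g Ob y \<in> Ob" "cls act (ssec act g Ob y) = g y" using ss_prop[OF EG g Ob(1) sl yS] by auto
      have spT: "ssec act g Ob y \<in> topspace (TT EG)" using sp(1) Ob_sub[OF EG g Ob(1) sl] by blast
      obtain j where j: "z = snd (ssec act g Ob y) j" using zP Pbar_g[OF yY spT sp(2)[symmetric]] by auto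
      have "cmod (snd (ssec act g Ob y) j - snd p0 n0) < r" using zb j by (simp add: dist_norm norm_minus_commute)
      then have "j = n0" using Nprop[OF sN] by blast
      then have "iotaW (?k y) = q'" using iota_Wcls[OF PD_in[OF EG g Ob(1) sl yS]] yz j by simp
      then show "q' \<in> iotaW ` G" using kyG by (metis image_eqI)
    qed
    then show "\<exists>T. openin (subtopology (prod_topology Y euclidean) (Eg Y EG act g)) T \<and> q \<in> T \<and> T \<subseteq> iotaW ` G"
      using To qT by blast
  qed
qed

lemma iota_embedding: "embedding_map (WW Y EG act g) (prod_topology Y euclidean) iotaW"
  unfolding embedding_map_def
proof (rule bijective_open_imp_homeomorphic_map)
  have EgI: "Eg Y EG act g = iotaW ` topspace (WW Y EG act g)" unfolding Eg_def ..
  show "continuous_map (WW Y EG act g) (subtopology (prod_topology Y euclidean) (iotaW ` topspace (WW Y EG act g))) iotaW"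
    unfolding continuous_map_in_subtopology using continuous_iota by blast
  show "open_map (WW Y EG act g) (subtopology (prod_topology Y euclidean) (iotaW ` topspace (WW Y EG act g))) iotaW"
    using iota_open unfolding EgI .
  show "iotaW ` topspace (WW Y EG act g) = topspace (subtopology (prod_topology Y euclidean) (iotaW ` topspace (WW Y EG act g)))"
    using Eg_sub unfolding EgI by auto
  show "inj_on iotaW (topspace (WW Y EG act g))" by (rule iota_inj)
qed

lemma Eg_closed: "closedin (prod_topology Y euclidean) (Eg Y EG act g)"
  unfolding closedin_def
proof (intro conjI Eg_sub)
  have Fc: "continuous_map Y vague_top (\<lambda>y. Pbar (g y))"
    using continuous_map_compose[OF g continuous_Pbar[OF EG]] by (simp add: o_def)
  show "openin (prod_topology Y euclidean) (topspace (prod_topology Y euclidean) - Eg Y EG act g)"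
  proof (subst openin_subopen, intro ballI)
    fix q assume q: "q \<in> topspace (prod_topology Y euclidean) - Eg Y EG act g"
    then obtain y0 z0 where yz: "q = (y0, z0)" by (metis prod.collapse)
    have y0: "y0 \<in> topspace Y" and z0: "z0 \<notin> Pbar (g y0)" using q yz unfolding Eg_char by auto
    have F0: "Pbar (g y0) \<in> Clf" using Fc y0 unfolding continuous_map_def by fastforce
    obtain V r where V: "openin vague_top V" "Pbar (g y0) \<in> V" "r > 0" and Vp: "\<And>T z. T \<in> V \<Longrightarrow> z \<in> T \<Longrightarrow> r \<le> cmod (z - z0)"
      using vague_avoid[OF F0 z0] by blast
    define T where "T = {y \<in> topspace Y. Pbar (g y) \<in> V} \<times> ball z0 r"
    have "openin (prod_topology Y euclidean) T" unfolding T_def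
      using openin_continuous_map_preimage[OF Fc V(1)] by (simp add: openin_prod_Times_iff)
    moreover have "q \<in> T" unfolding T_def yz using y0 V by simp
    moreover have "T \<subseteq> topspace (prod_topology Y euclidean) - Eg Y EG act g"
    proof
      fix q' assume q': "q' \<in> T"
      then obtain y z where yz': "q' = (y, z)" by (metis prod.collapse)
      have y: "y \<in> topspace Y" and FV: "Pbar (g y) \<in> V" and zb: "dist z0 z < r" using q' yz' unfolding T_def by auto
      have "z \<notin> Pbar (g y)"
      proof
        assume "z \<in> Pbar (g y)"
        then have "r \<le> cmod (z - z0)" using Vp[OF FV] by blast
        then show False using zb by (simp add: dist_norm norm_minus_commute)
      qed
      then show "q' \<in> topspace (prod_topology Y euclidean) - Eg Y EG act g" using y yz' unfolding Eg_char by auto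
    qed
    ultimately show "\<exists>T. openin (prod_topology Y euclidean) T \<and> q \<in> T \<and> T \<subseteq> topspace (prod_topology Y euclidean) - Eg Y EG act g"
      by blast
  qed
qed

lemma covering_Eg: "covering_map (subtopology (prod_topology Y euclidean) (Eg Y EG act g)) Y fst"
proof (rule covering_transport[OF covering_piW[OF EG g]])
  show "homeomorphic_map (WW Y EG act g) (subtopology (prod_topology Y euclidean) (Eg Y EG act g)) iotaW"
    using iota_embedding unfolding embedding_map_def Eg_def .
  show "\<And>c. c \<in> topspace (WW Y EG act g) \<Longrightarrow> fst (iotaW c) = piW c" unfolding iotaW_def by simp
qed

end

theorem mainTheorem14:
  fixes Y :: "'y topology" and EG :: "'e topology"
    and act :: "'e \<Rightarrow> (nat \<Rightarrow> nat) \<Rightarrow> 'e"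
    and g :: "'y \<Rightarrow> ('e \<times> (nat \<Rightarrow> complex)) set"
  assumes EG: "EG_space EG act"
    and Y: "Hausdorff_space Y"
    and g: "continuous_map Y (XG_top EG act) g"
  shows "embedding_map (W_top Y EG act g) (prod_topology Y euclidean) iotaW
       \<and> (\<forall>w\<in>topspace (W_top Y EG act g). fst (iotaW w) = piW w)
       \<and> covering_map (W_top Y EG act g) Y piW
       \<and> covering_map (subtopology (prod_topology Y euclidean) (Eg Y EG act g)) Y fst
       \<and> Eg Y EG act g = {(y, z). y \<in> topspace Y \<and> z \<in> Pbar (g y)}
       \<and> closedin (prod_topology Y euclidean) (Eg Y EG act g)"
proof (intro conjI ballI)
  show "embedding_map (W_top Y EG act g) (prod_topology Y euclidean) iotaW" using iota_embedding[OF EG g] .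
  show "\<And>w. fst (iotaW w) = piW w" unfolding iotaW_def by simp
  show "covering_map (W_top Y EG act g) Y piW" using covering_piW[OF EG g] .
  show "covering_map (subtopology (prod_topology Y euclidean) (Eg Y EG act g)) Y fst" using covering_Eg[OF EG g] .
  show "Eg Y EG act g = {(y, z). y \<in> topspace Y \<and> z \<in> Pbar (g y)}" using Eg_char[OF EG g] .
  show "closedin (prod_topology Y euclidean) (Eg Y EG act g)" using Eg_closed[OF EG g] .
qed

end
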